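(* Let $R$ be a subring of $\mathbb{Q}$, let $\Phi$ be a set of finite-rank-free-by-1 $R$-modules, and let $G$ be a torsion-free $R$-module with nucleus $R$ which is both $\Phi$-complete and $\Phi$-represented. Then $G$ is a splitter, i.e. $\mathrm{Ext}(G,G)=0$.
   Context: For a torsion-free group $X\neq0$, $\mathrm{nuc}\,X$ is the largest subring of $\mathbb{Q}$ over which $X$ is a module. Let $n\le\omega$. Let $B$ be the free $R$-module with basis $\{x_i:i<n\}\cup\{y_m:m\in\omega\}$, let $p_m\in R\setminus\{0\}$ and $k_{im}\in R$ with, for each $m$, $k_{im}=0$ for all but finitely many $i$, and let $N$ be the submodule generated by $y_{m+1}p_m-y_m-\sum_{i<n}x_ik_{im}$ $(m\in\omega)$. An $R$-module $G'$ is $n$-free-by-1 if $G'\cong B/N$ for such data, $G'$ is not free, and, if $n$ is finite, every $R$-submodule of $G'$ of rank $\le n$ is free; it is finite-rank-free-by-1 if it is $n$-free-by-1 for some finite $n$. $G$ is $\Phi$-complete if $\mathrm{Ext}(G',G)=0$ for all $G'\in\Phi$. $G$ is $\Phi$-represented if $G=\bigcup_{\alpha<\lambda}G_\alpha$ for an ascending continuous chain of $R$-submodules with $G_0=0$ and each $G_{\alpha+1}/G_\alpha$ isomorphic to a member of $\Phi$ or to a free $R$-module. *)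

theory Defs
  imports "HOL-Algebra.Algebra" "HOL-Library.Extended_Nat"
begin

definition Qring :: "rat set \<Rightarrow> rat ring" where
  "Qring S = \<lparr>carrier = S, monoid.mult = (*), one = 1, ring.zero = 0, ring.add = (+)\<rparr>"

definition subring_of_Q :: "rat set \<Rightarrow> bool" where
  "subring_of_Q S \<longleftrightarrow> subring S (Qring UNIV)"

definition R_module :: "rat set \<Rightarrow> (rat, 'a) module \<Rightarrow> bool" where
  "R_module R M \<longleftrightarrow> module (Qring R) M"

definition module_over :: "rat set \<Rightarrow> (rat, 'a) module \<Rightarrow> bool" where
  "module_over S M \<longleftrightarrow> (\<exists>sm. module (Qring S) (M\<lparr>smult := sm\<rparr>))"

definition nuc :: "(rat, 'a) module \<Rightarrow> rat set" where
  "nuc M = (THE S. subring_of_Q S \<and> module_over S M \<and>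
                   (\<forall>S'. subring_of_Q S' \<and> module_over S' M \<longrightarrow> S' \<subseteq> S))"

definition torsion_free :: "(rat, 'a) module \<Rightarrow> bool" where
  "torsion_free M \<longleftrightarrow>
     (\<forall>x\<in>carrier M. \<forall>n::int. n \<noteq> 0 \<and> add_pow M n x = \<zero>\<^bsub>M\<^esub> \<longrightarrow> x = \<zero>\<^bsub>M\<^esub>)"

definition lin_indep :: "rat set \<Rightarrow> (rat, 'a) module \<Rightarrow> 'i set \<Rightarrow> ('i \<Rightarrow> 'a) \<Rightarrow> bool" where
  "lin_indep R M I v \<longleftrightarrow>
     (\<forall>F c. finite F \<and> F \<subseteq> I \<and> c ` F \<subseteq> R \<and>
        finsum M (\<lambda>i. c i \<odot>\<^bsub>M\<^esub> v i) F = \<zero>\<^bsub>M\<^esub> \<longrightarrow> (\<forall>i\<in>F. c i = 0))"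

definition R_spans :: "rat set \<Rightarrow> (rat, 'a) module \<Rightarrow> 'a set \<Rightarrow> bool" where
  "R_spans R M W \<longleftrightarrow>
     (\<forall>y\<in>carrier M. \<exists>F c. finite F \<and> F \<subseteq> W \<and> c ` F \<subseteq> R \<and>
        y = finsum M (\<lambda>u. c u \<odot>\<^bsub>M\<^esub> u) F)"

definition free_R_module :: "rat set \<Rightarrow> (rat, 'a) module \<Rightarrow> bool" where
  "free_R_module R M \<longleftrightarrow> R_module R M \<and>
     (\<exists>W \<subseteq> carrier M. lin_indep R M W id \<and> R_spans R M W)"

definition rank_le :: "rat set \<Rightarrow> (rat, 'a) module \<Rightarrow> nat \<Rightarrow> bool" where
  "rank_le R M n \<longleftrightarrow>
     (\<forall>W \<subseteq> carrier M. lin_indep R M W id \<longrightarrow> finite W \<and> card W \<le> n)"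

text \<open>Presentation data: basis x_i (i<n) = Inl i and y_m = Inr m of the free module B,
  whose elements are finitely supported R-valued coefficient functions.\<close>
definition basis_idx :: "enat \<Rightarrow> (nat + nat) set" where
  "basis_idx n = Inl ` {i. enat i < n} \<union> Inr ` UNIV"

definition free_B :: "rat set \<Rightarrow> enat \<Rightarrow> (nat + nat \<Rightarrow> rat) set" where
  "free_B R n = {c. finite {j. c j \<noteq> 0} \<and> {j. c j \<noteq> 0} \<subseteq> basis_idx n \<and> range c \<subseteq> R}"

text \<open>The relation y_{m+1} p_m - y_m - sum_{i<n} x_i k_{im}, as an element of B.\<close>
definition rel_vec :: "enat \<Rightarrow> (nat \<Rightarrow> rat) \<Rightarrow> (nat \<Rightarrow> nat \<Rightarrow> rat) \<Rightarrow> nat \<Rightarrow> (nat + nat \<Rightarrow> rat)" where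
  "rel_vec n p k m = (\<lambda>j. case j of
      Inr m' \<Rightarrow> (if m' = Suc m then p m else 0) - (if m' = m then 1 else 0)
    | Inl i \<Rightarrow> (if enat i < n then - k i m else 0))"

definition rel_submod :: "rat set \<Rightarrow> enat \<Rightarrow> (nat \<Rightarrow> rat) \<Rightarrow> (nat \<Rightarrow> nat \<Rightarrow> rat) \<Rightarrow> (nat + nat \<Rightarrow> rat) set" where
  "rel_submod R n p k = {(\<lambda>j. \<Sum>m\<in>F. a m * rel_vec n p k m j) | F a. finite F \<and> a ` F \<subseteq> R}"

text \<open>G' is isomorphic to B/N: the R-linear map B \<rightarrow> G' sending the basis to x, y
  is surjective with kernel N.\<close>
definition presented_by :: "rat set \<Rightarrow> enat \<Rightarrow> (rat, 'c) module \<Rightarrow> (nat \<Rightarrow> 'c) \<Rightarrow> (nat \<Rightarrow> 'c)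
    \<Rightarrow> (nat \<Rightarrow> rat) \<Rightarrow> (nat \<Rightarrow> nat \<Rightarrow> rat) \<Rightarrow> bool" where
  "presented_by R n M x y p k \<longleftrightarrow>
     (let e = (\<lambda>j. case j of Inl i \<Rightarrow> x i | Inr m \<Rightarrow> y m);
          \<phi> = (\<lambda>c. finsum M (\<lambda>j. c j \<odot>\<^bsub>M\<^esub> e j) {j. c j \<noteq> 0})
      in (\<forall>i. enat i < n \<longrightarrow> x i \<in> carrier M) \<and> (\<forall>m. y m \<in> carrier M) \<and>
         \<phi> ` free_B R n = carrier M \<and>
         (\<forall>c\<in>free_B R n. \<phi> c = \<zero>\<^bsub>M\<^esub> \<longleftrightarrow> c \<in> rel_submod R n p k))"

definition n_free_by_1 :: "rat set \<Rightarrow> enat \<Rightarrow> (rat, 'c) module \<Rightarrow> bool" where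
  "n_free_by_1 R n M \<longleftrightarrow> R_module R M \<and>
     (\<exists>x y p k. (\<forall>m. p m \<in> R \<and> p m \<noteq> 0) \<and> (\<forall>i m. k i m \<in> R) \<and>
        (\<forall>m. finite {i. enat i < n \<and> k i m \<noteq> 0}) \<and>
        presented_by R n M x y p k) \<and>
     \<not> free_R_module R M \<and>
     (\<forall>n'. n = enat n' \<longrightarrow>
        (\<forall>H. submodule H (Qring R) M \<and> rank_le R (M\<lparr>carrier := H\<rparr>) n'
              \<longrightarrow> free_R_module R (M\<lparr>carrier := H\<rparr>)))"

definition finite_rank_free_by_1 :: "rat set \<Rightarrow> (rat, 'c) module \<Rightarrow> bool" where
  "finite_rank_free_by_1 R M \<longleftrightarrow> (\<exists>n::nat. n_free_by_1 R (enat n) M)"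

definition add_hom :: "('a, 'm) ring_scheme \<Rightarrow> ('b, 'n) ring_scheme \<Rightarrow> ('a \<Rightarrow> 'b) \<Rightarrow> bool" where
  "add_hom W Y f \<longleftrightarrow> f \<in> carrier W \<rightarrow> carrier Y \<and>
     (\<forall>u\<in>carrier W. \<forall>v\<in>carrier W. f (u \<oplus>\<^bsub>W\<^esub> v) = f u \<oplus>\<^bsub>Y\<^esub> f v)"

text \<open>Every extension is isomorphic to one whose underlying set is B \<times> A, so it suffices
  to let E range over abelian groups with carrier a subset of 'b \<times> 'a.\<close>
definition Ext_zero :: "(rat, 'a) module \<Rightarrow> (rat, 'b) module \<Rightarrow> bool" where
  "Ext_zero A B \<longleftrightarrow>
     (\<forall>(E :: ('b \<times> 'a) ring) i \<pi>.
        abelian_group E \<and> add_hom B E i \<and> inj_on i (carrier B) \<and>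
        add_hom E A \<pi> \<and> \<pi> ` carrier E = carrier A \<and>
        {e \<in> carrier E. \<pi> e = \<zero>\<^bsub>A\<^esub>} = i ` carrier B
        \<longrightarrow> (\<exists>s. add_hom A E s \<and> (\<forall>a\<in>carrier A. \<pi> (s a) = a)))"

definition splitter :: "(rat, 'a) module \<Rightarrow> bool" where
  "splitter G \<longleftrightarrow> Ext_zero G G"

definition Phi_complete :: "(rat, 'c) module set \<Rightarrow> (rat, 'a) module \<Rightarrow> bool" where
  "Phi_complete \<Phi> G \<longleftrightarrow> (\<forall>G'\<in>\<Phi>. Ext_zero G' G)"

definition quot_mod :: "(rat, 'a) module \<Rightarrow> 'a set \<Rightarrow> 'a set \<Rightarrow> (rat, 'a set) module" where
  "quot_mod M H K = \<lparr>carrier = (\<lambda>a. K +>\<^bsub>M\<^esub> a) ` H,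
      monoid.mult = (\<lambda>W Y. K), one = K, ring.zero = K,
      ring.add = (\<lambda>W Y. W <+>\<^bsub>M\<^esub> Y),
      module.smult = (\<lambda>r W. K +>\<^bsub>M\<^esub> (r \<odot>\<^bsub>M\<^esub> (SOME x. x \<in> W)))\<rparr>"

definition R_iso :: "rat set \<Rightarrow> (rat, 'a) module \<Rightarrow> (rat, 'b) module \<Rightarrow> bool" where
  "R_iso R M1 M2 \<longleftrightarrow> (\<exists>f. bij_betw f (carrier M1) (carrier M2) \<and> add_hom M1 M2 f \<and>
     (\<forall>r\<in>R. \<forall>u\<in>carrier M1. f (r \<odot>\<^bsub>M1\<^esub> u) = r \<odot>\<^bsub>M2\<^esub> f u))"

text \<open>G = union of an ascending continuous chain (G_alpha) indexed by the well-order r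
  (i.e. by the ordinals below lambda = ordertype of r), G_0 = 0, and every
  G_{alpha+1}/G_alpha isomorphic to a member of Phi or free.\<close>
definition Phi_represented :: "rat set \<Rightarrow> (rat, 'c) module set \<Rightarrow> (rat, 'a) module
    \<Rightarrow> ('i \<times> 'i) set \<Rightarrow> ('i \<Rightarrow> 'a set) \<Rightarrow> bool" where
  "Phi_represented R \<Phi> G r C \<longleftrightarrow>
     (let I = Field r; lt = (\<lambda>a b. (a, b) \<in> r \<and> a \<noteq> b) in
      Well_order r \<and>
      (\<forall>\<alpha>\<in>I. submodule (C \<alpha>) (Qring R) G) \<and>
      (\<forall>\<alpha>\<in>I. \<forall>\<beta>\<in>I. (\<alpha>, \<beta>) \<in> r \<longrightarrow> C \<alpha> \<subseteq> C \<beta>) \<and>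
      (\<forall>\<alpha>\<in>I. (\<forall>\<beta>\<in>I. (\<alpha>, \<beta>) \<in> r) \<longrightarrow> C \<alpha> = {\<zero>\<^bsub>G\<^esub>}) \<and>
      (\<forall>\<alpha>\<in>I. (\<exists>\<beta>\<in>I. lt \<beta> \<alpha>) \<and> (\<forall>\<beta>\<in>I. lt \<beta> \<alpha> \<longrightarrow> (\<exists>\<gamma>\<in>I. lt \<beta> \<gamma> \<and> lt \<gamma> \<alpha>))
          \<longrightarrow> C \<alpha> = (\<Union>\<beta>\<in>{\<beta>\<in>I. lt \<beta> \<alpha>}. C \<beta>)) \<and>
      (\<forall>\<alpha>\<in>I. \<forall>\<beta>\<in>I. lt \<alpha> \<beta> \<and> (\<forall>\<gamma>\<in>I. lt \<alpha> \<gamma> \<longrightarrow> (\<beta>, \<gamma>) \<in> r)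
          \<longrightarrow> (\<exists>G'\<in>\<Phi>. R_iso R (quot_mod G (C \<beta>) (C \<alpha>)) G') \<or>
              free_R_module R (quot_mod G (C \<beta>) (C \<alpha>))) \<and>
      (\<Union>\<alpha>\<in>I. C \<alpha>) = carrier G)"

end

theory Submission
  imports Defs
begin


definition decS :: "('e,'m) ring_scheme \<Rightarrow> 'e set \<Rightarrow> 'x set \<Rightarrow> ('x \<Rightarrow> 'e) \<Rightarrow> 'e \<Rightarrow> 'x" where
  "decS E S Xs enc e = (THE x. x \<in> Xs \<and> e \<ominus>\<^bsub>E\<^esub> enc x \<in> S)"

definition transT :: "('e,'m) ring_scheme \<Rightarrow> 'e set \<Rightarrow> 'x set \<Rightarrow> ('x \<Rightarrow> 'e) \<Rightarrow> 'x ring" where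
  "transT E S Xs enc = \<lparr>carrier = Xs, monoid.mult = (\<lambda>x y. x), one = undefined,
     ring.zero = decS E S Xs enc \<zero>\<^bsub>E\<^esub>, ring.add = (\<lambda>x y. decS E S Xs enc (enc x \<oplus>\<^bsub>E\<^esub> enc y))\<rparr>"

locale transport = abelian_group E for E (structure) +
  fixes P S :: "'a set" and Xs :: "'x set" and enc :: "'x \<Rightarrow> 'a"
  assumes P_sub: "P \<subseteq> carrier E" and S_sub: "S \<subseteq> P"
    and P_add: "\<And>a b. a \<in> P \<Longrightarrow> b \<in> P \<Longrightarrow> a \<oplus> b \<in> P"
    and P_neg: "\<And>a. a \<in> P \<Longrightarrow> \<ominus> a \<in> P"
    and P_zero: "\<zero> \<in> P"
    and S_add: "\<And>a b. a \<in> S \<Longrightarrow> b \<in> S \<Longrightarrow> a \<oplus> b \<in> S"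
    and S_neg: "\<And>a. a \<in> S \<Longrightarrow> \<ominus> a \<in> S"
    and S_zero: "\<zero> \<in> S"
    and enc_P: "\<And>x. x \<in> Xs \<Longrightarrow> enc x \<in> P"
    and uniq: "\<And>e. e \<in> P \<Longrightarrow> \<exists>!x. x \<in> Xs \<and> e \<ominus> enc x \<in> S"
begin

abbreviation "dec \<equiv> decS E S Xs enc"
abbreviation "T \<equiv> transT E S Xs enc"

lemma PE: "a \<in> P \<Longrightarrow> a \<in> carrier E" using P_sub by auto
lemma SE: "a \<in> S \<Longrightarrow> a \<in> carrier E" using S_sub P_sub by auto

lemma dec_prop: assumes "e \<in> P" shows "dec e \<in> Xs" "e \<ominus> enc (dec e) \<in> S"
proof -
  have "dec e \<in> Xs \<and> e \<ominus> enc (dec e) \<in> S"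
    unfolding decS_def using theI'[OF uniq[OF assms]] .
  thus "dec e \<in> Xs" "e \<ominus> enc (dec e) \<in> S" by auto
qed

lemma dec_eq: assumes "x \<in> Xs" "e \<in> P" "e \<ominus> enc x \<in> S" shows "dec e = x"
  unfolding decS_def using assms uniq[OF assms(2)] by (auto intro!: the1_equality)

lemma dec_enc: "x \<in> Xs \<Longrightarrow> dec (enc x) = x"
  by (rule dec_eq) (auto simp: enc_P PE r_neg a_minus_def S_zero)

lemma S_diff: "a \<in> S \<Longrightarrow> b \<in> S \<Longrightarrow> a \<ominus> b \<in> S"
  by (simp add: a_minus_def S_add S_neg)

lemma dec_cong: assumes "a \<in> P" "b \<in> P" "a \<ominus> b \<in> S" shows "dec a = dec b"
proof (rule dec_eq)
  show "dec b \<in> Xs" using dec_prop assms by auto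
  have c: "enc (dec b) \<in> carrier E" "a \<in> carrier E" "b \<in> carrier E"
    using assms dec_prop(1)[OF assms(2)] enc_P PE by auto
  have "(a \<ominus> b) \<oplus> (b \<ominus> enc (dec b)) = a \<oplus> (\<ominus> b \<oplus> b) \<oplus> \<ominus> enc (dec b)"
    using c by (simp add: a_minus_def a_assoc)
  also have "\<dots> = a \<ominus> enc (dec b)" using c by (simp add: l_neg a_minus_def)
  finally have "a \<ominus> enc (dec b) = (a \<ominus> b) \<oplus> (b \<ominus> enc (dec b))" by simp
  thus "a \<ominus> enc (dec b) \<in> S" using S_add assms dec_prop(2)[OF assms(2)] by simp
qed (use assms in auto)

lemma enc_dec_S: "a \<in> P \<Longrightarrow> enc (dec a) \<ominus> a \<in> S"
proof -
  assume a: "a \<in> P"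
  have "enc (dec a) \<ominus> a = \<ominus> (a \<ominus> enc (dec a))"
    using a dec_prop[OF a] enc_P PE by (simp add: a_minus_def minus_add a_comm minus_minus)
  thus ?thesis using S_neg dec_prop(2)[OF a] by simp
qed

lemma dec_add: assumes "a \<in> P" "b \<in> P"
  shows "dec (enc (dec a) \<oplus> enc (dec b)) = dec (a \<oplus> b)"
proof (rule dec_cong)
  have da: "enc (dec a) \<in> carrier E" "enc (dec b) \<in> carrier E"
    using dec_prop assms enc_P PE by auto
  show "enc (dec a) \<oplus> enc (dec b) \<in> P" using dec_prop assms enc_P P_add by auto
  show "a \<oplus> b \<in> P" using assms P_add by auto
  have "enc (dec a) \<oplus> enc (dec b) \<ominus> (a \<oplus> b) = (enc (dec a) \<ominus> a) \<oplus> (enc (dec b) \<ominus> b)"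
    using da assms PE by (simp add: a_minus_def minus_add a_ac)
  thus "enc (dec a) \<oplus> enc (dec b) \<ominus> (a \<oplus> b) \<in> S" using S_add enc_dec_S assms by simp
qed

lemma T_carrier[simp]: "carrier T = Xs" by (simp add: transT_def)
lemma T_add[simp]: "x \<oplus>\<^bsub>T\<^esub> y = dec (enc x \<oplus> enc y)" by (simp add: transT_def)
lemma T_zero[simp]: "\<zero>\<^bsub>T\<^esub> = dec \<zero>" by (simp add: transT_def)

lemma dec_add_l: assumes "a \<in> P" "b \<in> P" shows "dec (enc (dec a) \<oplus> b) = dec (a \<oplus> b)"
proof -
  have ea: "enc (dec a) \<in> P" using enc_P dec_prop(1) assms by auto
  have "dec (enc (dec a) \<oplus> b) = dec (enc (dec (enc (dec a))) \<oplus> enc (dec b))"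
    using dec_add[OF ea assms(2)] by simp
  also have "\<dots> = dec (enc (dec a) \<oplus> enc (dec b))" using dec_enc dec_prop(1) assms by simp
  also have "\<dots> = dec (a \<oplus> b)" using dec_add assms by simp
  finally show ?thesis .
qed
lemma dec_add_r: assumes "a \<in> P" "b \<in> P" shows "dec (a \<oplus> enc (dec b)) = dec (a \<oplus> b)"
proof -
  have "dec (a \<oplus> enc (dec b)) = dec (enc (dec b) \<oplus> a)"
    using assms enc_P dec_prop(1) PE by (simp add: a_comm)
  also have "\<dots> = dec (b \<oplus> a)" using dec_add_l assms by simp
  also have "\<dots> = dec (a \<oplus> b)" using assms PE by (simp add: a_comm)
  finally show ?thesis .
qed

lemma T_group: "abelian_group T"
proof (rule abelian_groupI)
  fix x y z assume xyz: "x \<in> carrier T" "y \<in> carrier T" "z \<in> carrier T"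
  hence e: "enc x \<in> P" "enc y \<in> P" "enc z \<in> P" using enc_P by auto
  show "x \<oplus>\<^bsub>T\<^esub> y \<in> carrier T" using dec_prop P_add e by auto
  show "x \<oplus>\<^bsub>T\<^esub> y \<oplus>\<^bsub>T\<^esub> z = x \<oplus>\<^bsub>T\<^esub> (y \<oplus>\<^bsub>T\<^esub> z)"
    using e by (simp add: dec_add_l dec_add_r P_add a_assoc PE)
  show "x \<oplus>\<^bsub>T\<^esub> y = y \<oplus>\<^bsub>T\<^esub> x" using e by (simp add: a_comm PE)
next
  show "\<zero>\<^bsub>T\<^esub> \<in> carrier T" using dec_prop P_zero by auto
next
  fix x assume x: "x \<in> carrier T"
  hence e: "enc x \<in> P" using enc_P by auto
  show "\<zero>\<^bsub>T\<^esub> \<oplus>\<^bsub>T\<^esub> x = x" using e x by (simp add: dec_add_l P_zero PE dec_enc)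
  have "dec (\<ominus> enc x) \<oplus>\<^bsub>T\<^esub> x = \<zero>\<^bsub>T\<^esub>" using e
    by (simp add: dec_add_l P_neg PE l_neg)
  moreover have "dec (\<ominus> enc x) \<in> carrier T" using dec_prop P_neg e by auto
  ultimately show "\<exists>y\<in>carrier T. y \<oplus>\<^bsub>T\<^esub> x = \<zero>\<^bsub>T\<^esub>" by blast
qed

lemma dec_hom: "a \<in> P \<Longrightarrow> b \<in> P \<Longrightarrow> dec (a \<oplus> b) = dec a \<oplus>\<^bsub>T\<^esub> dec b"
  by (simp add: dec_add)

lemma enc_add_S: "x \<in> Xs \<Longrightarrow> y \<in> Xs \<Longrightarrow> enc (x \<oplus>\<^bsub>T\<^esub> y) \<ominus> (enc x \<oplus> enc y) \<in> S"
  using enc_dec_S P_add enc_P by simp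

end


lemma add_hom_group_hom:
  assumes "abelian_group A" "abelian_group B" "add_hom A B f"
  shows "group_hom (add_monoid A) (add_monoid B) f"
proof -
  interpret A: abelian_group A by fact
  interpret B: abelian_group B by fact
  show ?thesis using assms(3)
    by (auto simp: group_hom_def group_hom_axioms_def hom_def add_hom_def
       A.a_group B.a_group)
qed

lemma add_hom_zero:
  assumes "abelian_group A" "abelian_group B" "add_hom A B f"
  shows "f \<zero>\<^bsub>A\<^esub> = \<zero>\<^bsub>B\<^esub>"
  using group_hom.hom_one[OF add_hom_group_hom[OF assms]] by simp

lemma add_hom_neg:
  assumes "abelian_group A" "abelian_group B" "add_hom A B f" "x \<in> carrier A"
  shows "f (\<ominus>\<^bsub>A\<^esub> x) = \<ominus>\<^bsub>B\<^esub> f x"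
  using group_hom.hom_inv[OF add_hom_group_hom[OF assms(1-3)]] assms(4)
  by (simp add: a_inv_def)

lemma add_hom_minus:
  assumes "abelian_group A" "abelian_group B" "add_hom A B f" "x \<in> carrier A" "y \<in> carrier A"
  shows "f (x \<ominus>\<^bsub>A\<^esub> y) = f x \<ominus>\<^bsub>B\<^esub> f y"
proof -
  interpret A: abelian_group A by fact
  show ?thesis using assms add_hom_neg[OF assms(1-3) assms(5)]
    by (simp add: a_minus_def add_hom_def)
qed

lemma add_hom_pow:
  assumes "abelian_group A" "abelian_group B" "add_hom A B f" "x \<in> carrier A"
  shows "f (add_pow A (n::int) x) = add_pow B n (f x)"
  using group_hom.hom_int_pow[OF add_hom_group_hom[OF assms(1-3)]] assms(4)
  by (simp add: add_pow_def)

definition sect :: "('a,'g) ring_scheme \<Rightarrow> ('e,'m) ring_scheme \<Rightarrow> ('e \<Rightarrow> 'a) \<Rightarrow> 'a set \<Rightarrow> ('a \<Rightarrow> 'e) \<Rightarrow> bool" where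
  "sect G E \<pi> D s \<longleftrightarrow> (\<forall>h\<in>D. s h \<in> carrier E \<and> \<pi> (s h) = h) \<and>
     (\<forall>u\<in>D. \<forall>v\<in>D. s (u \<oplus>\<^bsub>G\<^esub> v) = s u \<oplus>\<^bsub>E\<^esub> s v)"

definition subgrp :: "('a,'g) ring_scheme \<Rightarrow> 'a set \<Rightarrow> bool" where
  "subgrp G H \<longleftrightarrow> H \<subseteq> carrier G \<and> \<zero>\<^bsub>G\<^esub> \<in> H \<and> (\<forall>a\<in>H. \<forall>b\<in>H. a \<oplus>\<^bsub>G\<^esub> b \<in> H) \<and> (\<forall>a\<in>H. \<ominus>\<^bsub>G\<^esub> a \<in> H)"

lemma subgrp_minus: "subgrp G H \<Longrightarrow> a \<in> H \<Longrightarrow> b \<in> H \<Longrightarrow> a \<ominus>\<^bsub>G\<^esub> b \<in> H"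
  by (simp add: subgrp_def a_minus_def)

lemma sect_zero:
  assumes "abelian_group G" "abelian_group E" "subgrp G K" "sect G E \<pi> K s"
  shows "s \<zero>\<^bsub>G\<^esub> = \<zero>\<^bsub>E\<^esub>"
proof -
  interpret G: abelian_group G by fact
  interpret E: abelian_group E by fact
  have z: "\<zero>\<^bsub>G\<^esub> \<in> K" using assms(3) by (simp add: subgrp_def)
  hence c: "s \<zero>\<^bsub>G\<^esub> \<in> carrier E" using assms(4) by (simp add: sect_def)
  have "s \<zero>\<^bsub>G\<^esub> = s \<zero>\<^bsub>G\<^esub> \<oplus>\<^bsub>E\<^esub> s \<zero>\<^bsub>G\<^esub>"
    using assms(4) z by (metis G.l_zero G.zero_closed sect_def)
  thus ?thesis using c by (metis E.l_zero E.zero_closed E.add.right_cancel)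
qed

lemma sect_neg:
  assumes "abelian_group G" "abelian_group E" "subgrp G K" "sect G E \<pi> K s" "k \<in> K"
  shows "s (\<ominus>\<^bsub>G\<^esub> k) = \<ominus>\<^bsub>E\<^esub> s k"
proof -
  interpret G: abelian_group G by fact
  interpret E: abelian_group E by fact
  have k: "\<ominus>\<^bsub>G\<^esub> k \<in> K" "k \<in> carrier G" using assms(3,5) by (auto simp: subgrp_def)
  have c: "s k \<in> carrier E" "s (\<ominus>\<^bsub>G\<^esub> k) \<in> carrier E" using assms(4,5) k by (auto simp: sect_def)
  have "s (\<ominus>\<^bsub>G\<^esub> k) \<oplus>\<^bsub>E\<^esub> s k = \<zero>\<^bsub>E\<^esub>"
    using assms(4,5) k sect_zero[OF assms(1-4)] by (metis G.l_neg sect_def)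
  thus ?thesis using c by (metis E.minus_equality)
qed

lemma sect_minus:
  assumes "abelian_group G" "abelian_group E" "subgrp G K" "sect G E \<pi> K s" "k \<in> K" "l \<in> K"
  shows "s (k \<ominus>\<^bsub>G\<^esub> l) = s k \<ominus>\<^bsub>E\<^esub> s l"
  using assms sect_neg[OF assms(1-4) assms(6)]
  by (simp add: a_minus_def sect_def subgrp_def)


context abelian_group begin
lemma A4: "a \<in> carrier G \<Longrightarrow> h \<in> carrier G \<Longrightarrow> a \<oplus> (h \<ominus> a) = h"
  by (metis a_comm minus_closed minus_eq add.inv_solve_right')
lemma A5: "a \<in> carrier G \<Longrightarrow> b \<in> carrier G \<Longrightarrow> a \<ominus> b = c \<Longrightarrow> a = b \<oplus> c"
  using A4[of b a] by simp
lemma A9: "b \<in> carrier G \<Longrightarrow> c \<in> carrier G \<Longrightarrow> (b \<oplus> c) \<ominus> b = c"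
  by (metis a_comm minus_closed minus_eq add.inv_solve_right' a_closed)
end

lemma succ_step:
  fixes G :: "(rat,'a) module" and E :: "('e,'m) ring_scheme" and Y :: "(rat,'c) module"
  assumes aG: "abelian_group G" and aE: "abelian_group E" and aY: "abelian_group Y"
    and hi: "add_hom G E i" and ii: "inj_on i (carrier G)" and hp: "add_hom E G \<pi>"
    and ker: "{e \<in> carrier E. \<pi> e = \<zero>\<^bsub>G\<^esub>} = i ` carrier G"
    and surj: "\<pi> ` carrier E = carrier G"
    and sK: "subgrp G K" and sH: "subgrp G H" and KH: "K \<subseteq> H"
    and sec: "sect G E \<pi> K s"
    and fY: "\<forall>h\<in>H. f h \<in> carrier Y"
    and fadd: "\<forall>u\<in>H. \<forall>v\<in>H. f (u \<oplus>\<^bsub>G\<^esub> v) = f u \<oplus>\<^bsub>Y\<^esub> f v"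
    and fsurj: "f ` H = carrier Y" and fker: "{h\<in>H. f h = \<zero>\<^bsub>Y\<^esub>} = K"
    and ext: "Ext_zero Y G"
  shows "\<exists>s'. sect G E \<pi> H s' \<and> (\<forall>k\<in>K. s' k = s k)"
proof -
  interpret G: abelian_group G by fact
  interpret E: abelian_group E by fact
  interpret Y: abelian_group Y by fact
  have Hc: "\<And>h. h \<in> H \<Longrightarrow> h \<in> carrier G" and H0: "\<zero>\<^bsub>G\<^esub> \<in> H"
    and Hadd: "\<And>a b. a \<in> H \<Longrightarrow> b \<in> H \<Longrightarrow> a \<oplus>\<^bsub>G\<^esub> b \<in> H"
    and Hneg: "\<And>a. a \<in> H \<Longrightarrow> \<ominus>\<^bsub>G\<^esub> a \<in> H"
    using sH unfolding subgrp_def by blast+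
  have Kc: "\<And>h. h \<in> K \<Longrightarrow> h \<in> carrier G" and K0: "\<zero>\<^bsub>G\<^esub> \<in> K"
    and Kadd: "\<And>a b. a \<in> K \<Longrightarrow> b \<in> K \<Longrightarrow> a \<oplus>\<^bsub>G\<^esub> b \<in> K"
    using sK unfolding subgrp_def by blast+
  have Hminus: "\<And>a b. a \<in> H \<Longrightarrow> b \<in> H \<Longrightarrow> a \<ominus>\<^bsub>G\<^esub> b \<in> H"
    by (rule subgrp_minus[OF sH])
  have iE: "\<And>g. g \<in> carrier G \<Longrightarrow> i g \<in> carrier E" using hi by (auto simp: add_hom_def)
  have iadd: "\<And>a b. a \<in> carrier G \<Longrightarrow> b \<in> carrier G \<Longrightarrow> i (a \<oplus>\<^bsub>G\<^esub> b) = i a \<oplus>\<^bsub>E\<^esub> i b"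
    using hi by (auto simp: add_hom_def)
  have pG: "\<And>e. e \<in> carrier E \<Longrightarrow> \<pi> e \<in> carrier G" using hp by (auto simp: add_hom_def)
  have padd: "\<And>a b. a \<in> carrier E \<Longrightarrow> b \<in> carrier E \<Longrightarrow> \<pi> (a \<oplus>\<^bsub>E\<^esub> b) = \<pi> a \<oplus>\<^bsub>G\<^esub> \<pi> b"
    using hp by (auto simp: add_hom_def)
  have pminus: "\<And>a b. a \<in> carrier E \<Longrightarrow> b \<in> carrier E \<Longrightarrow> \<pi> (a \<ominus>\<^bsub>E\<^esub> b) = \<pi> a \<ominus>\<^bsub>G\<^esub> \<pi> b"
    using add_hom_minus[OF aE aG hp] by blast
  have p0: "\<pi> \<zero>\<^bsub>E\<^esub> = \<zero>\<^bsub>G\<^esub>" using add_hom_zero[OF aE aG hp] .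
  have i0: "i \<zero>\<^bsub>G\<^esub> = \<zero>\<^bsub>E\<^esub>" using add_hom_zero[OF aG aE hi] .
  have pi: "\<And>g. g \<in> carrier G \<Longrightarrow> \<pi> (i g) = \<zero>\<^bsub>G\<^esub>" using ker by blast
  have kerE: "\<And>e. e \<in> carrier E \<Longrightarrow> \<pi> e = \<zero>\<^bsub>G\<^esub> \<Longrightarrow> \<exists>g\<in>carrier G. e = i g"
    using ker by blast
  have sE: "\<And>k. k \<in> K \<Longrightarrow> s k \<in> carrier E" and ps: "\<And>k. k \<in> K \<Longrightarrow> \<pi> (s k) = k"
    and sadd: "\<And>a b. a \<in> K \<Longrightarrow> b \<in> K \<Longrightarrow> s (a \<oplus>\<^bsub>G\<^esub> b) = s a \<oplus>\<^bsub>E\<^esub> s b"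
    using sec by (auto simp: sect_def)
  have s0: "s \<zero>\<^bsub>G\<^esub> = \<zero>\<^bsub>E\<^esub>" using sect_zero[OF aG aE sK sec] .
  have sneg: "\<And>k. k \<in> K \<Longrightarrow> s (\<ominus>\<^bsub>G\<^esub> k) = \<ominus>\<^bsub>E\<^esub> s k" using sect_neg[OF aG aE sK sec] by blast
  have Kneg: "\<And>a. a \<in> K \<Longrightarrow> \<ominus>\<^bsub>G\<^esub> a \<in> K" using sK unfolding subgrp_def by blast
  have f0: "f \<zero>\<^bsub>G\<^esub> = \<zero>\<^bsub>Y\<^esub>"
  proof -
    have "f \<zero>\<^bsub>G\<^esub> = f \<zero>\<^bsub>G\<^esub> \<oplus>\<^bsub>Y\<^esub> f \<zero>\<^bsub>G\<^esub>" using fadd H0 by (metis G.l_zero G.zero_closed)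
    thus ?thesis using fY H0 by (metis Y.l_zero Y.zero_closed Y.add.right_cancel)
  qed
  have fK: "\<And>k. k \<in> K \<Longrightarrow> f k = \<zero>\<^bsub>Y\<^esub>" using fker by blast
  have Hf0K: "\<And>h. h \<in> H \<Longrightarrow> f h = \<zero>\<^bsub>Y\<^esub> \<Longrightarrow> h \<in> K" using fker by blast
  have fminus: "\<And>a b. a \<in> H \<Longrightarrow> b \<in> H \<Longrightarrow> f (a \<ominus>\<^bsub>G\<^esub> b) = f a \<ominus>\<^bsub>Y\<^esub> f b"
  proof -
    fix a b assume ab: "a \<in> H" "b \<in> H"
    have "f (a \<ominus>\<^bsub>G\<^esub> b) \<oplus>\<^bsub>Y\<^esub> f b = f a"
      using fadd ab Hminus Hc G.A4 by (metis G.a_comm G.minus_closed)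
    thus "f (a \<ominus>\<^bsub>G\<^esub> b) = f a \<ominus>\<^bsub>Y\<^esub> f b"
      using ab fY Hminus by (metis Y.A9 Y.a_comm)
  qed
  define P where "P = {e \<in> carrier E. \<pi> e \<in> H}"
  define S where "S = s ` K"
  define t where "t = (\<lambda>c. if c = \<zero>\<^bsub>Y\<^esub> then \<zero>\<^bsub>E\<^esub> else SOME e. e \<in> P \<and> f (\<pi> e) = c)"
  have t: "t c \<in> P \<and> f (\<pi> (t c)) = c" if c: "c \<in> carrier Y" for c
  proof (cases "c = \<zero>\<^bsub>Y\<^esub>")
    case True thus ?thesis using p0 H0 f0 by (simp add: t_def P_def)
  next
    case False
    have "c \<in> f ` H" using c by (simp add: fsurj)
    then obtain h where h: "h \<in> H" "f h = c" by (rule imageE) simp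
    have "h \<in> \<pi> ` carrier E" using Hc h by (simp add: surj)
    then obtain e where e: "e \<in> carrier E" "\<pi> e = h" by (rule imageE) simp
    have "\<exists>e. e \<in> P \<and> f (\<pi> e) = c" using e h by (auto simp: P_def)
    from someI_ex[OF this] show ?thesis using False by (simp add: t_def)
  qed
  have t0: "t \<zero>\<^bsub>Y\<^esub> = \<zero>\<^bsub>E\<^esub>" by (simp add: t_def)
  define Xs where "Xs = carrier G \<times> carrier Y"
  define enc where "enc = (\<lambda>x. i (fst x) \<oplus>\<^bsub>E\<^esub> t (snd x))"
  have PE: "\<And>e. e \<in> P \<Longrightarrow> e \<in> carrier E" and PH: "\<And>e. e \<in> P \<Longrightarrow> \<pi> e \<in> H" by (auto simp: P_def)
  have tE: "\<And>c. c \<in> carrier Y \<Longrightarrow> t c \<in> carrier E" using t PE by blast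
  have encE: "\<And>x. x \<in> Xs \<Longrightarrow> enc x \<in> carrier E" using iE tE by (auto simp: enc_def Xs_def)
  have penc: "\<And>x. x \<in> Xs \<Longrightarrow> \<pi> (enc x) = \<pi> (t (snd x))"
    using iE tE padd pi pG by (auto simp: enc_def Xs_def)
  have encP: "\<And>x. x \<in> Xs \<Longrightarrow> enc x \<in> P" using penc encE t by (auto simp: P_def Xs_def)
  have fenc: "\<And>x. x \<in> Xs \<Longrightarrow> f (\<pi> (enc x)) = snd x" using penc t by (auto simp: Xs_def)
  have inS: "e \<ominus>\<^bsub>E\<^esub> b \<in> S \<longleftrightarrow> (\<exists>k\<in>K. e = b \<oplus>\<^bsub>E\<^esub> s k)" if "e \<in> carrier E" "b \<in> carrier E" for e b
  proof
    assume "e \<ominus>\<^bsub>E\<^esub> b \<in> S"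
    then obtain k where "k \<in> K" "e \<ominus>\<^bsub>E\<^esub> b = s k" by (auto simp: S_def)
    thus "\<exists>k\<in>K. e = b \<oplus>\<^bsub>E\<^esub> s k" using that E.A5 by blast
  next
    assume "\<exists>k\<in>K. e = b \<oplus>\<^bsub>E\<^esub> s k"
    then obtain k where "k \<in> K" "e = b \<oplus>\<^bsub>E\<^esub> s k" by blast
    thus "e \<ominus>\<^bsub>E\<^esub> b \<in> S" using that E.A9 sE by (auto simp: S_def)
  qed
  have char: "snd x = f (\<pi> e)" if x: "x \<in> Xs" and e: "e \<in> P" and k: "k \<in> K" "e = enc x \<oplus>\<^bsub>E\<^esub> s k" for x e k
  proof -
    have "\<pi> e = \<pi> (enc x) \<oplus>\<^bsub>G\<^esub> k" using k padd encE x sE ps by simp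
    moreover have "\<pi> (enc x) \<in> H" using PH encP x by blast
    moreover have "k \<in> H" using KH k by blast
    ultimately have "f (\<pi> e) = f (\<pi> (enc x)) \<oplus>\<^bsub>Y\<^esub> f k" using fadd by simp
    moreover have "snd x \<in> carrier Y" using x by (cases x) (simp add: Xs_def)
    ultimately show ?thesis using fenc x fK k by simp
  qed
  have uniq: "\<exists>!x. x \<in> Xs \<and> e \<ominus>\<^bsub>E\<^esub> enc x \<in> S" if e: "e \<in> P" for e
  proof -
    have eE: "e \<in> carrier E" using e PE by blast
    define c where "c = f (\<pi> e)"
    have c: "c \<in> carrier Y" using fY PH e by (simp add: c_def)
    define d where "d = e \<ominus>\<^bsub>E\<^esub> t c"
    have dE: "d \<in> carrier E" using eE tE c by (simp add: d_def)
    have ed: "e = t c \<oplus>\<^bsub>E\<^esub> d" using E.A5 eE tE c d_def by blast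
    have pd: "\<pi> d = \<pi> e \<ominus>\<^bsub>G\<^esub> \<pi> (t c)" using pminus eE tE c by (simp add: d_def)
    have pdH: "\<pi> d \<in> H" using pd Hminus PH e t c by simp
    have "f (\<pi> d) = \<zero>\<^bsub>Y\<^esub>" using pd fminus PH e t c by (simp add: c_def a_minus_def Y.r_neg)
    hence kK: "\<pi> d \<in> K" using Hf0K pdH by blast
    define k where "k = \<pi> d"
    have kK': "k \<in> K" using kK by (simp add: k_def)
    have pz: "\<pi> (d \<ominus>\<^bsub>E\<^esub> s k) = \<zero>\<^bsub>G\<^esub>" using pminus dE sE kK ps pG by (simp add: k_def a_minus_def G.r_neg)
    have dsk: "d \<ominus>\<^bsub>E\<^esub> s k \<in> carrier E" using dE sE[OF kK'] by simp
    from kerE[OF dsk pz] obtain g where g: "g \<in> carrier G" "d \<ominus>\<^bsub>E\<^esub> s k = i g" by blast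
    have dd: "d = s k \<oplus>\<^bsub>E\<^esub> i g" using E.A5[OF dE sE[OF kK'] g(2)] .
    note kK = kK'
    have ex: "e = enc (g, c) \<oplus>\<^bsub>E\<^esub> s k"
      using ed dd iE[OF g(1)] tE[OF c] sE[OF kK] by (simp add: enc_def E.a_ac)
    have xX: "(g, c) \<in> Xs" using g c by (simp add: Xs_def)
    show ?thesis
    proof (rule ex1I[of _ "(g, c)"])
      show "(g, c) \<in> Xs \<and> e \<ominus>\<^bsub>E\<^esub> enc (g, c) \<in> S" using xX ex inS eE encE kK by blast
    next
      fix y assume y: "y \<in> Xs \<and> e \<ominus>\<^bsub>E\<^esub> enc y \<in> S"
      then obtain k' where k': "k' \<in> K" "e = enc y \<oplus>\<^bsub>E\<^esub> s k'" using inS eE encE by blast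
      have sy: "snd y = c" using char[of y e k'] y e k' by (simp add: c_def)
      obtain g' where yg: "y = (g', c)" "g' \<in> carrier G" using y sy by (cases y) (auto simp: Xs_def)
      have "\<pi> e = \<pi> (t c) \<oplus>\<^bsub>G\<^esub> k'" using k' padd encE y sE ps penc yg by simp
      moreover have "\<pi> e = \<pi> (t c) \<oplus>\<^bsub>G\<^esub> k" using ex padd encE xX sE kK ps penc by simp
      ultimately have kk: "k' = k" using pG tE c Kc k' kK by (metis G.add.l_cancel)
      have "i g' \<oplus>\<^bsub>E\<^esub> (t c \<oplus>\<^bsub>E\<^esub> s k) = i g \<oplus>\<^bsub>E\<^esub> (t c \<oplus>\<^bsub>E\<^esub> s k)"
        using k' ex kk yg iE tE c sE kK g by (simp add: enc_def E.a_assoc)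
      hence "i g' = i g" using iE tE c sE kK g yg by (metis E.add.r_cancel E.a_closed)
      hence "g' = g" using ii yg g by (meson inj_onD)
      thus "y = (g, c)" using yg by simp
    qed
  qed
  have Pprops: "P \<subseteq> carrier E" "S \<subseteq> P"
    "\<And>a b. a \<in> P \<Longrightarrow> b \<in> P \<Longrightarrow> a \<oplus>\<^bsub>E\<^esub> b \<in> P"
    "\<And>a. a \<in> P \<Longrightarrow> \<ominus>\<^bsub>E\<^esub> a \<in> P" "\<zero>\<^bsub>E\<^esub> \<in> P"
    "\<And>a b. a \<in> S \<Longrightarrow> b \<in> S \<Longrightarrow> a \<oplus>\<^bsub>E\<^esub> b \<in> S"
    "\<And>a. a \<in> S \<Longrightarrow> \<ominus>\<^bsub>E\<^esub> a \<in> S" "\<zero>\<^bsub>E\<^esub> \<in> S"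
  proof -
    show "P \<subseteq> carrier E" by (auto simp: P_def)
    show "S \<subseteq> P" using sE ps KH by (auto simp: S_def P_def)
    show "\<And>a b. a \<in> P \<Longrightarrow> b \<in> P \<Longrightarrow> a \<oplus>\<^bsub>E\<^esub> b \<in> P" using padd Hadd by (auto simp: P_def)
    show "\<And>a. a \<in> P \<Longrightarrow> \<ominus>\<^bsub>E\<^esub> a \<in> P"
      using add_hom_neg[OF aE aG hp] Hneg by (auto simp: P_def)
    show "\<zero>\<^bsub>E\<^esub> \<in> P" using p0 H0 by (auto simp: P_def)
    show "\<And>a b. a \<in> S \<Longrightarrow> b \<in> S \<Longrightarrow> a \<oplus>\<^bsub>E\<^esub> b \<in> S"
      using sadd Kadd by (auto simp: S_def) (metis image_eqI)
    show "\<And>a. a \<in> S \<Longrightarrow> \<ominus>\<^bsub>E\<^esub> a \<in> S" using sneg Kneg by (auto simp: S_def) (metis image_eqI)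
    show "\<zero>\<^bsub>E\<^esub> \<in> S" using s0 K0 by (auto simp: S_def) (metis image_eqI)
  qed
  interpret tr: transport E P S Xs enc
    by (unfold_locales) (use Pprops encP uniq in auto)
  have Tg: "abelian_group tr.T" by (rule tr.T_group)
  interpret T: abelian_group tr.T by (rule Tg)
  have enc0: "\<And>g. g \<in> carrier G \<Longrightarrow> enc (g, \<zero>\<^bsub>Y\<^esub>) = i g"
    using iE by (simp add: enc_def t0)
  have dec_i: "tr.dec (i g) = (g, \<zero>\<^bsub>Y\<^esub>)" if g: "g \<in> carrier G" for g
  proof (rule tr.dec_eq)
    show "(g, \<zero>\<^bsub>Y\<^esub>) \<in> Xs" using g by (simp add: Xs_def)
    show "i g \<in> P" using g iE pi H0 by (simp add: P_def)
    show "i g \<ominus>\<^bsub>E\<^esub> enc (g, \<zero>\<^bsub>Y\<^esub>) \<in> S" using enc0 g iE Pprops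
      by (simp add: E.r_neg a_minus_def)
  qed
  have snd_dec: "snd (tr.dec e) = f (\<pi> e)" if e: "e \<in> P" for e
  proof -
    have "tr.dec e \<in> Xs" "e \<ominus>\<^bsub>E\<^esub> enc (tr.dec e) \<in> S" using tr.dec_prop e by auto
    then obtain k where "k \<in> K" "e = enc (tr.dec e) \<oplus>\<^bsub>E\<^esub> s k" using inS PE e encE by blast
    thus ?thesis using char \<open>tr.dec e \<in> Xs\<close> e by blast
  qed
  define i2 where "i2 = (\<lambda>g::'a. (g, \<zero>\<^bsub>Y\<^esub>))"
  have h1: "add_hom G tr.T i2"
    unfolding add_hom_def
  proof (intro conjI ballI)
    show "i2 \<in> carrier G \<rightarrow> carrier tr.T" by (auto simp: i2_def Xs_def transT_def)
    fix u v assume uv: "u \<in> carrier G" "v \<in> carrier G"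
    have "i2 u \<oplus>\<^bsub>tr.T\<^esub> i2 v = tr.dec (i u \<oplus>\<^bsub>E\<^esub> i v)" using uv enc0 by (simp add: i2_def)
    also have "\<dots> = i2 (u \<oplus>\<^bsub>G\<^esub> v)" using uv by (simp add: iadd[symmetric] dec_i i2_def)
    finally show "i2 (u \<oplus>\<^bsub>G\<^esub> v) = i2 u \<oplus>\<^bsub>tr.T\<^esub> i2 v" by simp
  qed
  have h2: "inj_on i2 (carrier G)" by (auto simp: i2_def inj_on_def)
  have h3: "add_hom tr.T Y snd"
    unfolding add_hom_def
  proof (intro conjI ballI)
    show "snd \<in> carrier tr.T \<rightarrow> carrier Y" by (auto simp: Xs_def transT_def)
    fix x y assume xy: "x \<in> carrier tr.T" "y \<in> carrier tr.T"
    hence xy': "x \<in> Xs" "y \<in> Xs" by auto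
    have "snd (x \<oplus>\<^bsub>tr.T\<^esub> y) = f (\<pi> (enc x \<oplus>\<^bsub>E\<^esub> enc y))"
      using snd_dec xy' encP Pprops(3) by simp
    also have "\<dots> = f (\<pi> (enc x)) \<oplus>\<^bsub>Y\<^esub> f (\<pi> (enc y))"
      using padd encE xy' fadd encP PH by simp
    also have "\<dots> = snd x \<oplus>\<^bsub>Y\<^esub> snd y" using fenc xy' by simp
    finally show "snd (x \<oplus>\<^bsub>tr.T\<^esub> y) = snd x \<oplus>\<^bsub>Y\<^esub> snd y" .
  qed
  have h4: "snd ` carrier tr.T = carrier Y"
  proof -
    have "snd ` Xs = carrier Y" unfolding Xs_def using G.zero_closed by (auto intro!: image_eqI)
    thus ?thesis by simp
  qed
  have h5: "{x \<in> carrier tr.T. snd x = \<zero>\<^bsub>Y\<^esub>} = i2 ` carrier G"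
    by (auto simp: Xs_def i2_def transT_def)
  obtain \<sigma> where sig: "add_hom Y tr.T \<sigma>" "\<forall>a\<in>carrier Y. snd (\<sigma> a) = a"
    using ext[unfolded Ext_zero_def, rule_format, of tr.T i2 snd] Tg h1 h2 h3 h4 h5 by blast
  have sigX: "\<And>a. a \<in> carrier Y \<Longrightarrow> \<sigma> a \<in> Xs" using sig(1) by (auto simp: add_hom_def)
  have sigadd: "\<And>a b. a \<in> carrier Y \<Longrightarrow> b \<in> carrier Y \<Longrightarrow> \<sigma> (a \<oplus>\<^bsub>Y\<^esub> b) = \<sigma> a \<oplus>\<^bsub>tr.T\<^esub> \<sigma> b"
    using sig(1) by (auto simp: add_hom_def)
  have sig0: "\<sigma> \<zero>\<^bsub>Y\<^esub> = tr.dec \<zero>\<^bsub>E\<^esub>" using add_hom_zero[OF aY Tg sig(1)] by simp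
  define z where "z = (\<lambda>h. enc (\<sigma> (f h)))"
  define m where "m = (\<lambda>h. h \<ominus>\<^bsub>G\<^esub> \<pi> (z h))"
  define s' where "s' = (\<lambda>h. z h \<oplus>\<^bsub>E\<^esub> s (m h))"
  have zP: "\<And>h. h \<in> H \<Longrightarrow> z h \<in> P" using encP sigX fY by (simp add: z_def)
  have zE: "\<And>h. h \<in> H \<Longrightarrow> z h \<in> carrier E" using zP PE by blast
  have fz: "\<And>h. h \<in> H \<Longrightarrow> f (\<pi> (z h)) = f h" using fenc sigX fY sig(2) by (simp add: z_def)
  have mK: "\<And>h. h \<in> H \<Longrightarrow> m h \<in> K"
  proof -
    fix h assume h: "h \<in> H"
    have "m h \<in> H" using Hminus h zP PH by (simp add: m_def)
    moreover have "f (m h) = \<zero>\<^bsub>Y\<^esub>" using fminus h zP PH fz fY by (simp add: m_def Y.r_neg a_minus_def)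
    ultimately show "m h \<in> K" using Hf0K by blast
  qed
  have pzm: "\<And>h. h \<in> H \<Longrightarrow> \<pi> (z h) \<oplus>\<^bsub>G\<^esub> m h = h"
    using G.A4 zP PH Hc by (simp add: m_def)
  have sect': "sect G E \<pi> H s'"
    unfolding sect_def
  proof (intro conjI ballI)
    fix h assume h: "h \<in> H"
    show "s' h \<in> carrier E" using zE h sE mK by (simp add: s'_def)
    show "\<pi> (s' h) = h" using padd zE h sE mK ps pzm by (simp add: s'_def)
  next
    fix u v assume u: "u \<in> H" and v: "v \<in> H"
    have uv: "u \<oplus>\<^bsub>G\<^esub> v \<in> H" using Hadd u v by blast
    have "\<sigma> (f (u \<oplus>\<^bsub>G\<^esub> v)) = \<sigma> (f u) \<oplus>\<^bsub>tr.T\<^esub> \<sigma> (f v)"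
      using fadd u v sigadd fY by simp
    hence "z (u \<oplus>\<^bsub>G\<^esub> v) \<ominus>\<^bsub>E\<^esub> (z u \<oplus>\<^bsub>E\<^esub> z v) \<in> S"
      using tr.enc_add_S sigX fY u v by (simp add: z_def)
    hence "\<exists>k\<in>K. z (u \<oplus>\<^bsub>G\<^esub> v) = (z u \<oplus>\<^bsub>E\<^esub> z v) \<oplus>\<^bsub>E\<^esub> s k"
      using inS[OF zE[OF uv] E.a_closed[OF zE[OF u] zE[OF v]]] by simp
    then obtain k0 where k0: "k0 \<in> K" "z (u \<oplus>\<^bsub>G\<^esub> v) = (z u \<oplus>\<^bsub>E\<^esub> z v) \<oplus>\<^bsub>E\<^esub> s k0"
      by blast
    have pk: "\<pi> (z (u \<oplus>\<^bsub>G\<^esub> v)) = (\<pi> (z u) \<oplus>\<^bsub>G\<^esub> \<pi> (z v)) \<oplus>\<^bsub>G\<^esub> k0"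
      using k0 padd zE u v sE ps by simp
    have cG: "\<pi> (z u) \<in> carrier G" "\<pi> (z v) \<in> carrier G" "k0 \<in> carrier G"
      "m u \<in> carrier G" "m v \<in> carrier G" "m (u \<oplus>\<^bsub>G\<^esub> v) \<in> carrier G"
      using pG zE u v Kc k0 mK uv by auto
    have "(\<pi> (z u) \<oplus>\<^bsub>G\<^esub> \<pi> (z v)) \<oplus>\<^bsub>G\<^esub> (k0 \<oplus>\<^bsub>G\<^esub> m (u \<oplus>\<^bsub>G\<^esub> v))
        = \<pi> (z (u \<oplus>\<^bsub>G\<^esub> v)) \<oplus>\<^bsub>G\<^esub> m (u \<oplus>\<^bsub>G\<^esub> v)"
      using pk cG by (simp add: G.a_assoc)
    also have "\<dots> = u \<oplus>\<^bsub>G\<^esub> v" using pzm uv by blast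
    also have "\<dots> = (\<pi> (z u) \<oplus>\<^bsub>G\<^esub> m u) \<oplus>\<^bsub>G\<^esub> (\<pi> (z v) \<oplus>\<^bsub>G\<^esub> m v)"
      using pzm u v by simp
    also have "\<dots> = (\<pi> (z u) \<oplus>\<^bsub>G\<^esub> \<pi> (z v)) \<oplus>\<^bsub>G\<^esub> (m u \<oplus>\<^bsub>G\<^esub> m v)"
      using cG by (simp add: G.a_ac)
    finally have km: "k0 \<oplus>\<^bsub>G\<^esub> m (u \<oplus>\<^bsub>G\<^esub> v) = m u \<oplus>\<^bsub>G\<^esub> m v"
      using cG by (metis G.add.l_cancel G.a_closed)
    have cE: "z u \<in> carrier E" "z v \<in> carrier E" "s k0 \<in> carrier E" "s (m u) \<in> carrier E"
       "s (m v) \<in> carrier E" "s (m (u \<oplus>\<^bsub>G\<^esub> v)) \<in> carrier E"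
      using zE sE mK u v uv k0 by auto
    have "s' (u \<oplus>\<^bsub>G\<^esub> v) = (z u \<oplus>\<^bsub>E\<^esub> z v) \<oplus>\<^bsub>E\<^esub> (s k0 \<oplus>\<^bsub>E\<^esub> s (m (u \<oplus>\<^bsub>G\<^esub> v)))"
      using k0 cE by (simp add: s'_def E.a_assoc)
    also have "\<dots> = (z u \<oplus>\<^bsub>E\<^esub> z v) \<oplus>\<^bsub>E\<^esub> (s (m u) \<oplus>\<^bsub>E\<^esub> s (m v))"
      using sadd[of k0 "m (u \<oplus>\<^bsub>G\<^esub> v)"] sadd[of "m u" "m v"] k0 mK u v uv km by simp
    also have "\<dots> = s' u \<oplus>\<^bsub>E\<^esub> s' v" using cE by (simp add: s'_def E.a_ac)
    finally show "s' (u \<oplus>\<^bsub>G\<^esub> v) = s' u \<oplus>\<^bsub>E\<^esub> s' v" .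
  qed
  have extd: "\<forall>k\<in>K. s' k = s k"
  proof
    fix k assume k: "k \<in> K"
    have kH: "k \<in> H" using k KH by blast
    have "z k = enc (tr.dec \<zero>\<^bsub>E\<^esub>)" using fK k sig0 by (simp add: z_def)
    hence "z k \<ominus>\<^bsub>E\<^esub> \<zero>\<^bsub>E\<^esub> \<in> S" using tr.enc_dec_S Pprops(5) by simp
    hence "\<exists>k'\<in>K. z k = \<zero>\<^bsub>E\<^esub> \<oplus>\<^bsub>E\<^esub> s k'" using inS[OF zE[OF kH] E.zero_closed] by simp
    then obtain k1 where k1: "k1 \<in> K" "z k = \<zero>\<^bsub>E\<^esub> \<oplus>\<^bsub>E\<^esub> s k1" by blast
    hence zk: "z k = s k1" using sE by simp
    have "k1 \<oplus>\<^bsub>G\<^esub> m k = k" using pzm[OF kH] zk ps[OF k1(1)] by simp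
    hence "s (k1 \<oplus>\<^bsub>G\<^esub> m k) = s k" by simp
    thus "s' k = s k" using sadd k1 mK kH zk by (simp add: s'_def)
  qed
  show ?thesis using sect' extd by blast
qed


lemma wo_facts:
  assumes "Well_order r"
  shows "\<And>a. a \<in> Field r \<Longrightarrow> (a, a) \<in> r"
    and "\<And>a b. a \<in> Field r \<Longrightarrow> b \<in> Field r \<Longrightarrow> (a, b) \<in> r \<or> (b, a) \<in> r"
    and "\<And>a b. (a, b) \<in> r \<Longrightarrow> (b, a) \<in> r \<Longrightarrow> a = b"
    and "\<And>a b c. (a, b) \<in> r \<Longrightarrow> (b, c) \<in> r \<Longrightarrow> (a, c) \<in> r"
    and "\<And>B. B \<subseteq> Field r \<Longrightarrow> B \<noteq> {} \<Longrightarrow> wo_rel.minim r B \<in> B"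
    and "\<And>B b. B \<subseteq> Field r \<Longrightarrow> b \<in> B \<Longrightarrow> (wo_rel.minim r B, b) \<in> r"
proof -
  interpret wo_rel r using assms by (simp add: wo_rel_def)
  show "\<And>a. a \<in> Field r \<Longrightarrow> (a, a) \<in> r" using REFL by (simp add: refl_on_def)
  show "\<And>a b. a \<in> Field r \<Longrightarrow> b \<in> Field r \<Longrightarrow> (a, b) \<in> r \<or> (b, a) \<in> r" using TOTALS by blast
  show "\<And>a b. (a, b) \<in> r \<Longrightarrow> (b, a) \<in> r \<Longrightarrow> a = b" using ANTISYM by (simp add: antisym_def)
  show "\<And>a b c. (a, b) \<in> r \<Longrightarrow> (b, c) \<in> r \<Longrightarrow> (a, c) \<in> r" using TRANS by (meson transD)
  show "\<And>B. B \<subseteq> Field r \<Longrightarrow> B \<noteq> {} \<Longrightarrow> minim B \<in> B" by (rule minim_in)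
  show "\<And>B b. B \<subseteq> Field r \<Longrightarrow> b \<in> B \<Longrightarrow> (minim B, b) \<in> r" by (rule minim_least)
qed

lemma Field_in: "(a, b) \<in> r \<Longrightarrow> a \<in> Field r" "(a, b) \<in> r \<Longrightarrow> b \<in> Field r"
  by (auto simp: Field_def)

lemma union_dom:
  fixes r :: "('i \<times> 'i) set" and C :: "'i \<Rightarrow> 'a set"
  assumes WO: "Well_order r"
    and mono: "\<forall>\<alpha>\<in>Field r. \<forall>\<beta>\<in>Field r. (\<alpha>, \<beta>) \<in> r \<longrightarrow> C \<alpha> \<subseteq> C \<beta>"
    and cont: "\<forall>\<alpha>\<in>Field r. (\<exists>\<beta>\<in>Field r. (\<beta>, \<alpha>) \<in> r \<and> \<beta> \<noteq> \<alpha>) \<and>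
          (\<forall>\<beta>\<in>Field r. (\<beta>, \<alpha>) \<in> r \<and> \<beta> \<noteq> \<alpha> \<longrightarrow> (\<exists>\<gamma>\<in>Field r. ((\<beta>, \<gamma>) \<in> r \<and> \<beta> \<noteq> \<gamma>) \<and> ((\<gamma>, \<alpha>) \<in> r \<and> \<gamma> \<noteq> \<alpha>)))
          \<longrightarrow> C \<alpha> = (\<Union>\<beta>\<in>{\<beta>\<in>Field r. (\<beta>, \<alpha>) \<in> r \<and> \<beta> \<noteq> \<alpha>}. C \<beta>)"
    and cover: "(\<Union>\<alpha>\<in>Field r. C \<alpha>) = M"
    and Y: "Y \<subseteq> C ` Field r \<union> {M}" "Y \<noteq> {}"
  shows "\<Union>Y \<in> C ` Field r \<union> {M}"
proof (cases "M \<in> Y")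
  case True
  have "\<Union>Y = M" using Y True cover by auto
  thus ?thesis by simp
next
  case False
  note wf = wo_facts[OF WO]
  define A where "A = {\<alpha>\<in>Field r. C \<alpha> \<in> Y}"
  have UA: "\<Union>Y = (\<Union>\<alpha>\<in>A. C \<alpha>)" using Y False by (auto simp: A_def)
  have Ane: "A \<noteq> {}" using Y False by (auto simp: A_def)
  have AF: "A \<subseteq> Field r" by (auto simp: A_def)
  define UB where "UB = {\<beta>\<in>Field r. \<forall>\<alpha>\<in>A. (\<alpha>, \<beta>) \<in> r}"
  show ?thesis
  proof (cases "UB = {}")
    case True
    have "(\<Union>\<alpha>\<in>A. C \<alpha>) = M"
    proof
      show "(\<Union>\<alpha>\<in>A. C \<alpha>) \<subseteq> M" using cover AF by auto
      show "M \<subseteq> (\<Union>\<alpha>\<in>A. C \<alpha>)"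
      proof
        fix x assume "x \<in> M"
        then obtain \<beta> where b: "\<beta> \<in> Field r" "x \<in> C \<beta>" using cover by auto
        then obtain \<alpha> where a: "\<alpha> \<in> A" "(\<alpha>, \<beta>) \<notin> r" using True by (auto simp: UB_def)
        hence "(\<beta>, \<alpha>) \<in> r" using wf(2) b AF by blast
        hence "C \<beta> \<subseteq> C \<alpha>" using mono b a AF by blast
        thus "x \<in> (\<Union>\<alpha>\<in>A. C \<alpha>)" using a b by blast
      qed
    qed
    thus ?thesis using UA by simp
  next
    case False
    define \<gamma> where "\<gamma> = wo_rel.minim r UB"
    have UBF: "UB \<subseteq> Field r" by (auto simp: UB_def)
    have gUB: "\<gamma> \<in> UB" using wf(5)[OF UBF False] by (simp add: \<gamma>_def)
    have gF: "\<gamma> \<in> Field r" using gUB UBF by blast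
    have gle: "\<And>\<beta>. \<beta> \<in> UB \<Longrightarrow> (\<gamma>, \<beta>) \<in> r" using wf(6)[OF UBF] by (simp add: \<gamma>_def)
    show ?thesis
    proof (cases "\<gamma> \<in> A")
      case True
      have "(\<Union>\<alpha>\<in>A. C \<alpha>) = C \<gamma>"
      proof
        show "(\<Union>\<alpha>\<in>A. C \<alpha>) \<subseteq> C \<gamma>" using gUB mono AF gF by (auto simp: UB_def)
        show "C \<gamma> \<subseteq> (\<Union>\<alpha>\<in>A. C \<alpha>)" using True by blast
      qed
      thus ?thesis using UA gF by simp
    next
      case gA: False
      have ltA: "\<And>\<alpha>. \<alpha> \<in> A \<Longrightarrow> (\<alpha>, \<gamma>) \<in> r \<and> \<alpha> \<noteq> \<gamma>" using gUB gA by (auto simp: UB_def)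
      have below: "\<exists>\<alpha>\<in>A. (\<beta>, \<alpha>) \<in> r \<and> \<beta> \<noteq> \<alpha>" if b: "\<beta> \<in> Field r" "(\<beta>, \<gamma>) \<in> r" "\<beta> \<noteq> \<gamma>" for \<beta>
      proof -
        have "\<beta> \<notin> UB"
        proof
          assume "\<beta> \<in> UB"
          hence "(\<gamma>, \<beta>) \<in> r" by (rule gle)
          thus False using b wf(3) by blast
        qed
        then obtain \<alpha> where a: "\<alpha> \<in> A" "(\<alpha>, \<beta>) \<notin> r" using b by (auto simp: UB_def)
        hence "(\<beta>, \<alpha>) \<in> r" using wf(2) b AF by blast
        moreover have "\<beta> \<noteq> \<alpha>" using a wf(1) b by blast
        ultimately show ?thesis using a by blast
      qed
      obtain \<alpha>0 where a0: "\<alpha>0 \<in> A" using Ane by blast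
      have lim: "(\<exists>\<beta>\<in>Field r. (\<beta>, \<gamma>) \<in> r \<and> \<beta> \<noteq> \<gamma>) \<and>
          (\<forall>\<beta>\<in>Field r. (\<beta>, \<gamma>) \<in> r \<and> \<beta> \<noteq> \<gamma> \<longrightarrow> (\<exists>\<delta>\<in>Field r. ((\<beta>, \<delta>) \<in> r \<and> \<beta> \<noteq> \<delta>) \<and> ((\<delta>, \<gamma>) \<in> r \<and> \<delta> \<noteq> \<gamma>)))"
      proof (intro conjI ballI impI)
        show "\<exists>\<beta>\<in>Field r. (\<beta>, \<gamma>) \<in> r \<and> \<beta> \<noteq> \<gamma>" using a0 ltA AF by blast
        fix \<beta> assume "\<beta> \<in> Field r" "(\<beta>, \<gamma>) \<in> r \<and> \<beta> \<noteq> \<gamma>"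
        then obtain \<alpha> where "\<alpha> \<in> A" "(\<beta>, \<alpha>) \<in> r \<and> \<beta> \<noteq> \<alpha>" using below by blast
        thus "\<exists>\<delta>\<in>Field r. ((\<beta>, \<delta>) \<in> r \<and> \<beta> \<noteq> \<delta>) \<and> ((\<delta>, \<gamma>) \<in> r \<and> \<delta> \<noteq> \<gamma>)"
          using ltA AF by blast
      qed
      have Cg: "C \<gamma> = (\<Union>\<beta>\<in>{\<beta>\<in>Field r. (\<beta>, \<gamma>) \<in> r \<and> \<beta> \<noteq> \<gamma>}. C \<beta>)"
        using cont gF lim by blast
      have "(\<Union>\<alpha>\<in>A. C \<alpha>) = C \<gamma>"
      proof
        show "(\<Union>\<alpha>\<in>A. C \<alpha>) \<subseteq> C \<gamma>" unfolding Cg using ltA AF by blast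
        show "C \<gamma> \<subseteq> (\<Union>\<alpha>\<in>A. C \<alpha>)"
        proof
          fix x assume "x \<in> C \<gamma>"
          then obtain \<beta> where b: "\<beta> \<in> Field r" "(\<beta>, \<gamma>) \<in> r" "\<beta> \<noteq> \<gamma>" "x \<in> C \<beta>" unfolding Cg by blast
          then obtain \<alpha> where a: "\<alpha> \<in> A" "(\<beta>, \<alpha>) \<in> r" using below by blast
          hence "C \<beta> \<subseteq> C \<alpha>" using mono b AF by blast
          thus "x \<in> (\<Union>\<alpha>\<in>A. C \<alpha>)" using a b by blast
        qed
      qed
      thus ?thesis using UA gF by simp
    qed
  qed
qed


definition fnr :: "('a \<times> 'e) set \<Rightarrow> 'a \<Rightarrow> 'e" where "fnr Q d = (THE e. (d, e) \<in> Q)"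

lemma fnr_in: "single_valued Q \<Longrightarrow> d \<in> Domain Q \<Longrightarrow> (d, fnr Q d) \<in> Q"
  unfolding fnr_def by (rule theI') (auto simp: single_valued_def)

lemma fnr_eq: "single_valued Q \<Longrightarrow> (d, e) \<in> Q \<Longrightarrow> fnr Q d = e"
  unfolding fnr_def by (rule the_equality) (auto simp: single_valued_def)

lemma sect_cong:
  assumes "sect G E \<pi> D s1" "\<And>d. d \<in> D \<Longrightarrow> s1 d = s2 d"
    "\<And>u v. u \<in> D \<Longrightarrow> v \<in> D \<Longrightarrow> u \<oplus>\<^bsub>G\<^esub> v \<in> D"
  shows "sect G E \<pi> D s2"
  using assms unfolding sect_def by metis

lemma eklof:
  fixes G :: "('a,'g) ring_scheme" and E :: "('e,'m) ring_scheme" and r :: "('i \<times> 'i) set"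
    and C :: "'i \<Rightarrow> 'a set"
  assumes aG: "abelian_group G" and aE: "abelian_group E" and hp: "add_hom E G \<pi>"
    and WO: "Well_order r"
    and Csub: "\<forall>\<alpha>\<in>Field r. subgrp G (C \<alpha>)"
    and mono: "\<forall>\<alpha>\<in>Field r. \<forall>\<beta>\<in>Field r. (\<alpha>, \<beta>) \<in> r \<longrightarrow> C \<alpha> \<subseteq> C \<beta>"
    and bot: "\<forall>\<alpha>\<in>Field r. (\<forall>\<beta>\<in>Field r. (\<alpha>, \<beta>) \<in> r) \<longrightarrow> C \<alpha> = {\<zero>\<^bsub>G\<^esub>}"
    and cont: "\<forall>\<alpha>\<in>Field r. (\<exists>\<beta>\<in>Field r. (\<beta>, \<alpha>) \<in> r \<and> \<beta> \<noteq> \<alpha>) \<and>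
          (\<forall>\<beta>\<in>Field r. (\<beta>, \<alpha>) \<in> r \<and> \<beta> \<noteq> \<alpha> \<longrightarrow> (\<exists>\<gamma>\<in>Field r. ((\<beta>, \<gamma>) \<in> r \<and> \<beta> \<noteq> \<gamma>) \<and> ((\<gamma>, \<alpha>) \<in> r \<and> \<gamma> \<noteq> \<alpha>)))
          \<longrightarrow> C \<alpha> = (\<Union>\<beta>\<in>{\<beta>\<in>Field r. (\<beta>, \<alpha>) \<in> r \<and> \<beta> \<noteq> \<alpha>}. C \<beta>)"
    and cover: "(\<Union>\<alpha>\<in>Field r. C \<alpha>) = carrier G"
    and step: "\<forall>\<alpha>\<in>Field r. \<forall>\<beta>\<in>Field r. ((\<alpha>, \<beta>) \<in> r \<and> \<alpha> \<noteq> \<beta>) \<and> (\<forall>\<gamma>\<in>Field r. ((\<alpha>, \<gamma>) \<in> r \<and> \<alpha> \<noteq> \<gamma>) \<longrightarrow> (\<beta>, \<gamma>) \<in> r)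
          \<longrightarrow> (\<forall>s. sect G E \<pi> (C \<alpha>) s \<longrightarrow> (\<exists>s'. sect G E \<pi> (C \<beta>) s' \<and> (\<forall>k\<in>C \<alpha>. s' k = s k)))"
  shows "\<exists>s. sect G E \<pi> (carrier G) s"
proof -
  interpret G: abelian_group G by fact
  interpret E: abelian_group E by fact
  note wf = wo_facts[OF WO]
  define Doms where "Doms = C ` Field r \<union> {carrier G}"
  have Dclosed: "\<And>D u v. D \<in> Doms \<Longrightarrow> u \<in> D \<Longrightarrow> v \<in> D \<Longrightarrow> u \<oplus>\<^bsub>G\<^esub> v \<in> D"
    using Csub by (auto simp: Doms_def subgrp_def)
  have Dsub: "\<And>D. D \<in> Doms \<Longrightarrow> D \<subseteq> carrier G"
    using Csub by (auto simp: Doms_def subgrp_def)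
  define A where "A = {Q. single_valued Q \<and> Domain Q \<in> Doms \<and> sect G E \<pi> (Domain Q) (fnr Q)}"
  have grA: "(\<lambda>d. (d, s d)) ` D \<in> A" if D: "D \<in> Doms" and s: "sect G E \<pi> D s" for D s
  proof -
    let ?Q = "(\<lambda>d. (d, s d)) ` D"
    have sv: "single_valued ?Q" by (auto simp: single_valued_def)
    have dom: "Domain ?Q = D" by force
    have "s d = fnr ?Q d" if d: "d \<in> D" for d
    proof -
      have "(d, s d) \<in> ?Q" using d by blast
      from fnr_eq[OF sv this] show ?thesis by simp
    qed
    hence "sect G E \<pi> D (fnr ?Q)" using sect_cong[OF s _ Dclosed[OF D]] by blast
    thus ?thesis using sv dom D by (simp add: A_def)
  qed
  have Fne: "Field r \<noteq> {}" using cover G.zero_closed by auto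
  have "\<exists>M\<in>A. \<forall>Q\<in>A. M \<subseteq> Q \<longrightarrow> Q = M"
  proof (rule Zorn_Lemma2, intro ballI)
    fix Ch assume Ch: "Ch \<in> chains A"
    hence ChA: "Ch \<subseteq> A" and chain: "\<And>Q Y. Q \<in> Ch \<Longrightarrow> Y \<in> Ch \<Longrightarrow> Q \<subseteq> Y \<or> Y \<subseteq> Q"
      by (auto simp: chains_def chain_subset_def)
    show "\<exists>U\<in>A. \<forall>Q\<in>Ch. Q \<subseteq> U"
    proof (cases "Ch = {}")
      case True
      define \<alpha>0 where "\<alpha>0 = wo_rel.minim r (Field r)"
      have a0: "\<alpha>0 \<in> Field r" using wf(5)[OF _ Fne] by (simp add: \<alpha>0_def)
      have C0: "C \<alpha>0 = {\<zero>\<^bsub>G\<^esub>}" using bot a0 wf(6)[of "Field r"] by (simp add: \<alpha>0_def)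
      have sc: "sect G E \<pi> (C \<alpha>0) (\<lambda>_. \<zero>\<^bsub>E\<^esub>)"
        using add_hom_zero[OF aE aG hp] C0 by (simp add: sect_def)
      have "C \<alpha>0 \<in> Doms" using a0 by (simp add: Doms_def)
      from grA[OF this sc] have "(\<lambda>d. (d, \<zero>\<^bsub>E\<^esub>)) ` C \<alpha>0 \<in> A" .
      thus ?thesis using True by blast
    next
      case False
      define U where "U = \<Union>Ch"
      have svX: "\<And>Q. Q \<in> Ch \<Longrightarrow> single_valued Q" using ChA by (auto simp: A_def)
      have sv: "single_valued U"
        unfolding single_valued_def U_def
      proof (intro allI impI)
        fix x y z assume "(x, y) \<in> \<Union>Ch" "(x, z) \<in> \<Union>Ch"
        then obtain X1 X2 where "X1 \<in> Ch" "X2 \<in> Ch" "(x, y) \<in> X1" "(x, z) \<in> X2" by blast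
        thus "y = z" using chain svX by (metis single_valuedD subsetD)
      qed
      have domU: "Domain U = \<Union>(Domain ` Ch)" by (auto simp: U_def)
      have "\<Union>(Domain ` Ch) \<in> Doms" unfolding Doms_def
        by (rule union_dom[OF WO mono cont cover]) (use ChA False in \<open>auto simp: A_def Doms_def\<close>)
      hence dU: "Domain U \<in> Doms" using domU by simp
      have fnU: "fnr U d = fnr Q d" if Q: "Q \<in> Ch" "d \<in> Domain Q" for Q d
        using fnr_in[OF svX[OF Q(1)] Q(2)] fnr_eq[OF sv] Q(1) by (auto simp: U_def)
      have secX: "\<And>Q. Q \<in> Ch \<Longrightarrow> sect G E \<pi> (Domain Q) (fnr Q)" using ChA by (auto simp: A_def)
      have dX: "\<And>Q. Q \<in> Ch \<Longrightarrow> Domain Q \<in> Doms" using ChA by (auto simp: A_def)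
      have "sect G E \<pi> (Domain U) (fnr U)"
        unfolding sect_def
      proof (rule conjI; intro ballI)
        fix h assume "h \<in> Domain U"
        then obtain Q where Q: "Q \<in> Ch" "h \<in> Domain Q" using domU by auto
        thus "fnr U h \<in> carrier E \<and> \<pi> (fnr U h) = h" using fnU[OF Q] secX[OF Q(1)] by (simp add: sect_def)
      next
        fix u v assume "u \<in> Domain U" "v \<in> Domain U"
        then obtain X1 X2 where Q: "X1 \<in> Ch" "u \<in> Domain X1" "X2 \<in> Ch" "v \<in> Domain X2" using domU by auto
        obtain Q where XX: "Q \<in> Ch" "u \<in> Domain Q" "v \<in> Domain Q"
          using chain[OF Q(1) Q(3)] Q by blast
        have "u \<oplus>\<^bsub>G\<^esub> v \<in> Domain Q" using Dclosed dX XX by blast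
        thus "fnr U (u \<oplus>\<^bsub>G\<^esub> v) = fnr U u \<oplus>\<^bsub>E\<^esub> fnr U v"
          using fnU XX secX[OF XX(1)] by (simp add: sect_def)
      qed
      hence "U \<in> A" using sv dU by (simp add: A_def)
      thus ?thesis by (auto simp: U_def)
    qed
  qed
  then obtain M where MA: "M \<in> A" and Mmax: "\<And>Q. Q \<in> A \<Longrightarrow> M \<subseteq> Q \<Longrightarrow> Q = M" by blast
  define D where "D = Domain M"
  have svM: "single_valued M" and DD: "D \<in> Doms" and secM: "sect G E \<pi> D (fnr M)"
    using MA by (auto simp: A_def D_def)
  show ?thesis
  proof (cases "D = carrier G")
    case True thus ?thesis using secM by blast
  next
    case False
    then obtain \<alpha> where a: "\<alpha> \<in> Field r" "C \<alpha> = D" using DD by (auto simp: Doms_def)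
    define B where "B = {\<delta>\<in>Field r. \<not> C \<delta> \<subseteq> D}"
    have BF: "B \<subseteq> Field r" by (auto simp: B_def)
    have Bne: "B \<noteq> {}"
    proof
      assume "B = {}"
      hence "\<forall>\<delta>\<in>Field r. C \<delta> \<subseteq> D" by (auto simp: B_def)
      hence "carrier G \<subseteq> D" unfolding cover[symmetric] by blast
      thus False using False Dsub DD by blast
    qed
    define \<beta> where "\<beta> = wo_rel.minim r B"
    have bB: "\<beta> \<in> B" using wf(5)[OF BF Bne] by (simp add: \<beta>_def)
    have bF: "\<beta> \<in> Field r" using bB BF by blast
    have bmin: "\<And>\<delta>. \<delta> \<in> B \<Longrightarrow> (\<beta>, \<delta>) \<in> r" using wf(6)[OF BF] by (simp add: \<beta>_def)
    have below: "C \<gamma> \<subseteq> D" if g: "\<gamma> \<in> Field r" "(\<gamma>, \<beta>) \<in> r" "\<gamma> \<noteq> \<beta>" for \<gamma>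
    proof (rule ccontr)
      assume "\<not> C \<gamma> \<subseteq> D"
      hence "\<gamma> \<in> B" using g by (simp add: B_def)
      hence "(\<beta>, \<gamma>) \<in> r" by (rule bmin)
      thus False using g wf(3) by blast
    qed
    have ab: "(\<alpha>, \<beta>) \<in> r \<and> \<alpha> \<noteq> \<beta>"
    proof -
      have "\<alpha> \<notin> B" using a by (simp add: B_def)
      moreover have "(\<beta>, \<alpha>) \<notin> r"
      proof
        assume "(\<beta>, \<alpha>) \<in> r"
        hence "C \<beta> \<subseteq> C \<alpha>" using mono a bF by blast
        thus False using bB a by (simp add: B_def)
      qed
      ultimately show ?thesis using wf(2)[OF a(1) bF] bB by blast
    qed
    have notlim: "\<not> (\<forall>\<gamma>\<in>Field r. (\<gamma>, \<beta>) \<in> r \<and> \<gamma> \<noteq> \<beta> \<longrightarrow> (\<exists>\<delta>\<in>Field r. ((\<gamma>, \<delta>) \<in> r \<and> \<gamma> \<noteq> \<delta>) \<and> ((\<delta>, \<beta>) \<in> r \<and> \<delta> \<noteq> \<beta>)))"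
    proof
      assume l: "\<forall>\<gamma>\<in>Field r. (\<gamma>, \<beta>) \<in> r \<and> \<gamma> \<noteq> \<beta> \<longrightarrow> (\<exists>\<delta>\<in>Field r. ((\<gamma>, \<delta>) \<in> r \<and> \<gamma> \<noteq> \<delta>) \<and> ((\<delta>, \<beta>) \<in> r \<and> \<delta> \<noteq> \<beta>))"
      have "C \<beta> = (\<Union>\<gamma>\<in>{\<gamma>\<in>Field r. (\<gamma>, \<beta>) \<in> r \<and> \<gamma> \<noteq> \<beta>}. C \<gamma>)"
        using cont bF l ab a(1) by blast
      also have "\<dots> \<subseteq> D" using below by blast
      finally show False using bB by (simp add: B_def)
    qed
    then obtain \<alpha>' where a': "\<alpha>' \<in> Field r" "(\<alpha>', \<beta>) \<in> r" "\<alpha>' \<noteq> \<beta>"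
      and nod: "\<not> (\<exists>\<delta>\<in>Field r. ((\<alpha>', \<delta>) \<in> r \<and> \<alpha>' \<noteq> \<delta>) \<and> ((\<delta>, \<beta>) \<in> r \<and> \<delta> \<noteq> \<beta>))"
      by blast
    have succ: "\<forall>\<gamma>\<in>Field r. ((\<alpha>', \<gamma>) \<in> r \<and> \<alpha>' \<noteq> \<gamma>) \<longrightarrow> (\<beta>, \<gamma>) \<in> r"
    proof (intro ballI impI)
      fix \<gamma> assume g: "\<gamma> \<in> Field r" "(\<alpha>', \<gamma>) \<in> r \<and> \<alpha>' \<noteq> \<gamma>"
      show "(\<beta>, \<gamma>) \<in> r"
      proof (rule ccontr)
        assume "(\<beta>, \<gamma>) \<notin> r"
        hence "(\<gamma>, \<beta>) \<in> r" "\<gamma> \<noteq> \<beta>" using wf(2)[OF g(1) bF] wf(1)[OF bF] by auto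
        thus False using nod g by blast
      qed
    qed
    have Ca': "C \<alpha>' = D"
    proof
      show "C \<alpha>' \<subseteq> D" using below a' by blast
      have "(\<alpha>, \<alpha>') \<in> r"
      proof (rule ccontr)
        assume "(\<alpha>, \<alpha>') \<notin> r"
        hence "(\<alpha>', \<alpha>) \<in> r" "\<alpha>' \<noteq> \<alpha>" using wf(2)[OF a(1) a'(1)] wf(1)[OF a(1)] by auto
        thus False using nod ab a(1) by blast
      qed
      thus "D \<subseteq> C \<alpha>'" using mono a a'(1) by blast
    qed
    obtain s' where s': "sect G E \<pi> (C \<beta>) s'" "\<forall>k\<in>C \<alpha>'. s' k = fnr M k"
      using step a'(1) bF a' succ secM Ca' by blast
    define M' where "M' = (\<lambda>d. (d, s' d)) ` C \<beta>"
    have M'A: "M' \<in> A" using grA[OF _ s'(1)] bF by (simp add: Doms_def M'_def)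
    have DCb: "D \<subseteq> C \<beta>" using mono a' bF Ca' by blast
    have "M \<subseteq> M'"
    proof
      fix p assume p: "p \<in> M"
      obtain d e where de: "p = (d, e)" by (cases p)
      have "d \<in> D" using p de by (auto simp: D_def)
      moreover have "e = fnr M d" using fnr_eq[OF svM] p de by simp
      ultimately show "p \<in> M'" using s'(2) Ca' DCb de by (auto simp: M'_def)
    qed
    hence "M' = M" using Mmax M'A by blast
    hence "C \<beta> = D" by (force simp: M'_def D_def)
    hence False using bB by (simp add: B_def)
    thus ?thesis by blast
  qed
qed


lemma Qring_simps [simp]:
  "carrier (Qring S) = S" "add (Qring S) = (+)" "monoid.mult (Qring S) = (*)"
  "ring.zero (Qring S) = 0" "monoid.one (Qring S) = 1"
  by (simp_all add: Qring_def)

lemma Qring_UNIV_neg: "a_inv (Qring UNIV) a = - a"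
  unfolding a_inv_def m_inv_def by (rule the_equality) (auto simp: Qring_def)

locale subQ =
  fixes R :: "rat set"
  assumes sub: "subring_of_Q R"
begin

lemma R_closed: "0 \<in> R" "1 \<in> R" "a \<in> R \<Longrightarrow> b \<in> R \<Longrightarrow> a + b \<in> R"
  "a \<in> R \<Longrightarrow> b \<in> R \<Longrightarrow> a * b \<in> R" "a \<in> R \<Longrightarrow> - a \<in> R"
proof -
  have s: "subring R (Qring UNIV)" using sub by (simp add: subring_of_Q_def)
  have sg: "subgroup R (add_monoid (Qring UNIV))" and sm: "submonoid R (Qring UNIV)"
    using s by (auto simp: subring_def)
  show "0 \<in> R" using subgroup.one_closed[OF sg] by simp
  show "1 \<in> R" using submonoid.one_closed[OF sm] by simp
  show "a \<in> R \<Longrightarrow> b \<in> R \<Longrightarrow> a + b \<in> R" using subgroup.m_closed[OF sg] by simp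
  show "a \<in> R \<Longrightarrow> b \<in> R \<Longrightarrow> a * b \<in> R" using submonoid.m_closed[OF sm] by simp
  show "a \<in> R \<Longrightarrow> - a \<in> R" using subgroup.m_inv_closed[OF sg] Qring_UNIV_neg
    by (metis a_inv_def)
qed

lemma R_diff: assumes "a \<in> R" "b \<in> R" shows "a - b \<in> R"
proof -
  have "a + - b \<in> R" using R_closed(3)[OF assms(1) R_closed(5)[OF assms(2)]] .
  thus ?thesis by simp
qed

lemma R_nat: "of_nat k \<in> R"
  by (induction k) (auto intro: R_closed)

lemma R_int: "of_int n \<in> R"
proof (cases "n \<ge> 0")
  case True thus ?thesis using R_nat[of "nat n"] by simp
next
  case False
  hence "of_int n = - (of_nat (nat (- n)) :: rat)" by simp
  thus ?thesis using R_nat R_closed(5) by metis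
qed

lemma R_inv_denom:
  assumes q: "q \<in> R" and qo: "quotient_of q = (n, d)"
  shows "1 / of_int d \<in> R"
proof -
  have cop: "coprime n d" using quotient_of_coprime[OF qo] .
  have d0: "d > 0" using quotient_of_denom_pos[OF qo] .
  obtain u v where uv: "u * n + v * d = gcd n d" using bezout_int by blast
  hence uv1: "u * n + v * d = 1" using cop by simp
  have qq: "q = of_int n / of_int d" using quotient_of_div[OF qo] .
  have "1 / of_int d = of_int u * q + (of_int v :: rat)"
  proof -
    have "(of_int u * (of_int n / of_int d) + of_int v) * of_int d = of_int u * of_int n + of_int v * (of_int d :: rat)"
      using d0 by (simp add: field_simps)
    also have "\<dots> = of_int (u * n + v * d)" by simp
    also have "\<dots> = 1" using uv1 by simp
    finally have "(of_int u * q + of_int v) * of_int d = (1::rat)" using qq by simp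
    thus ?thesis using d0 by (simp add: field_simps)
  qed
  thus ?thesis using R_int q R_closed by simp
qed

end

locale Rmod = subQ R for R +
  fixes M :: "(rat, 'x) module"
  assumes modM: "module (Qring R) M"
begin

sublocale M: abelian_group M using modM by (simp add: module_def)

lemma sm_closed: "a \<in> R \<Longrightarrow> x \<in> carrier M \<Longrightarrow> a \<odot>\<^bsub>M\<^esub> x \<in> carrier M"
  using module.smult_closed[OF modM] by simp
lemma sm_ldistr: "a \<in> R \<Longrightarrow> b \<in> R \<Longrightarrow> x \<in> carrier M \<Longrightarrow> (a + b) \<odot>\<^bsub>M\<^esub> x = a \<odot>\<^bsub>M\<^esub> x \<oplus>\<^bsub>M\<^esub> b \<odot>\<^bsub>M\<^esub> x"
  using module.smult_l_distr[OF modM] by simp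
lemma sm_rdistr: "a \<in> R \<Longrightarrow> x \<in> carrier M \<Longrightarrow> y \<in> carrier M \<Longrightarrow> a \<odot>\<^bsub>M\<^esub> (x \<oplus>\<^bsub>M\<^esub> y) = a \<odot>\<^bsub>M\<^esub> x \<oplus>\<^bsub>M\<^esub> a \<odot>\<^bsub>M\<^esub> y"
  using module.smult_r_distr[OF modM] by simp
lemma sm_assoc: "a \<in> R \<Longrightarrow> b \<in> R \<Longrightarrow> x \<in> carrier M \<Longrightarrow> (a * b) \<odot>\<^bsub>M\<^esub> x = a \<odot>\<^bsub>M\<^esub> (b \<odot>\<^bsub>M\<^esub> x)"
  using module.smult_assoc1[OF modM] by simp
lemma sm_one: "x \<in> carrier M \<Longrightarrow> 1 \<odot>\<^bsub>M\<^esub> x = x"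
  using module.smult_one[OF modM] by simp
lemma sm_lzero: "x \<in> carrier M \<Longrightarrow> 0 \<odot>\<^bsub>M\<^esub> x = \<zero>\<^bsub>M\<^esub>"
  using module.smult_l_null[OF modM] by simp
lemma sm_rzero: "a \<in> R \<Longrightarrow> a \<odot>\<^bsub>M\<^esub> \<zero>\<^bsub>M\<^esub> = \<zero>\<^bsub>M\<^esub>"
  using module.smult_r_null[OF modM] by simp

lemma sm_neg1: assumes x: "x \<in> carrier M" shows "(- 1) \<odot>\<^bsub>M\<^esub> x = \<ominus>\<^bsub>M\<^esub> x"
proof -
  have m1: "(- 1 :: rat) \<in> R" using R_closed by simp
  have "(- 1) \<odot>\<^bsub>M\<^esub> x \<oplus>\<^bsub>M\<^esub> x = (- 1 + 1) \<odot>\<^bsub>M\<^esub> x"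
    using sm_ldistr[OF m1 R_closed(2) x] sm_one[OF x] by simp
  also have "\<dots> = \<zero>\<^bsub>M\<^esub>" using sm_lzero x by simp
  finally show ?thesis using m1 x sm_closed by (metis M.minus_equality)
qed

lemma add_pow_smult: assumes x: "x \<in> carrier M" shows "add_pow M (n::int) x = of_int n \<odot>\<^bsub>M\<^esub> x"
proof (induction n rule: int_induct[where k=0])
  case base thus ?case using sm_lzero x by (simp add: add_pow_def)
next
  case (step1 i)
  have "add_pow M (i + 1) x = add_pow M i x \<oplus>\<^bsub>M\<^esub> add_pow M (1::int) x"
    using M.add.int_pow_mult x by blast
  also have "\<dots> = of_int i \<odot>\<^bsub>M\<^esub> x \<oplus>\<^bsub>M\<^esub> 1 \<odot>\<^bsub>M\<^esub> x" using step1 x sm_one by simp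
  also have "\<dots> = of_int (i + 1) \<odot>\<^bsub>M\<^esub> x" using sm_ldistr[OF R_int R_closed(2) x] by simp
  finally show ?case .
next
  case (step2 i)
  have "add_pow M (i - 1) x = add_pow M i x \<oplus>\<^bsub>M\<^esub> add_pow M (- 1::int) x"
    using M.add.int_pow_mult[OF x, of i "-1"] by simp
  also have "\<dots> = of_int i \<odot>\<^bsub>M\<^esub> x \<oplus>\<^bsub>M\<^esub> (- 1) \<odot>\<^bsub>M\<^esub> x"
    using step2 x sm_neg1 M.add.int_pow_neg[OF x, of 1] by simp
  also have "\<dots> = (of_int i + - 1) \<odot>\<^bsub>M\<^esub> x"
    using sm_ldistr[OF R_int[of i] R_closed(5)[OF R_closed(2)] x] by simp
  also have "\<dots> = of_int (i - 1) \<odot>\<^bsub>M\<^esub> x" by simp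
  finally show ?case .
qed

lemma div_unique:
  assumes d: "1 / of_int d \<in> R" "d \<noteq> 0" and x: "x \<in> carrier M" "y \<in> carrier M"
    and eq: "add_pow M d x = y"
  shows "x = (1 / of_int d) \<odot>\<^bsub>M\<^esub> y"
proof -
  have "(1 / of_int d) \<odot>\<^bsub>M\<^esub> y = (1 / of_int d) \<odot>\<^bsub>M\<^esub> (of_int d \<odot>\<^bsub>M\<^esub> x)"
    using eq add_pow_smult[OF x(1)] by simp
  also have "\<dots> = (1 / of_int d * of_int d) \<odot>\<^bsub>M\<^esub> x"
    by (rule sm_assoc[OF d(1) R_int[of d] x(1), symmetric])
  also have "\<dots> = x" using d(2) sm_one x by simp
  finally show ?thesis by simp
qed

lemma mul_div:
  assumes d: "1 / of_int d \<in> R" "d \<noteq> 0" and y: "y \<in> carrier M"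
  shows "add_pow M d ((1 / of_int d) \<odot>\<^bsub>M\<^esub> y) = y"
proof -
  have "add_pow M d ((1 / of_int d) \<odot>\<^bsub>M\<^esub> y) = (of_int d * (1 / of_int d)) \<odot>\<^bsub>M\<^esub> y"
    using add_pow_smult sm_closed[OF d(1) y] sm_assoc[OF R_int d(1) y] by metis
  also have "\<dots> = y" using d(2) sm_one y by simp
  finally show ?thesis .
qed

end


lemma hom_finsum:
  assumes aA: "abelian_group A" and aB: "abelian_group B" and h: "add_hom A B f"
    and fin: "finite V" and g: "g \<in> V \<rightarrow> carrier A"
  shows "f (finsum A g V) = finsum B (\<lambda>x. f (g x)) V"
  using fin g
proof (induction V rule: finite_induct)
  case empty
  interpret A: abelian_group A by fact
  interpret B: abelian_group B by fact
  show ?case using add_hom_zero[OF aA aB h] by simp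
next
  case (insert x V)
  interpret A: abelian_group A by fact
  interpret B: abelian_group B by fact
  have gV: "g \<in> V \<rightarrow> carrier A" and gx: "g x \<in> carrier A" using insert.prems by auto
  have fV: "(\<lambda>x. f (g x)) \<in> V \<rightarrow> carrier B" using gV h by (auto simp: add_hom_def)
  have fx: "f (g x) \<in> carrier B" using gx h by (auto simp: add_hom_def)
  have "f (finsum A g (insert x V)) = f (g x \<oplus>\<^bsub>A\<^esub> finsum A g V)"
    using A.finsum_insert[OF insert.hyps gV gx] by simp
  also have "\<dots> = f (g x) \<oplus>\<^bsub>B\<^esub> f (finsum A g V)"
    using h gx A.finsum_closed[OF gV] by (simp add: add_hom_def)
  also have "\<dots> = f (g x) \<oplus>\<^bsub>B\<^esub> finsum B (\<lambda>x. f (g x)) V" using insert.IH gV by simp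
  also have "\<dots> = finsum B (\<lambda>x. f (g x)) (insert x V)"
    using B.finsum_insert[OF insert.hyps fV fx] by simp
  finally show ?case .
qed

context abelian_group begin
lemma B4: "a \<in> carrier G \<Longrightarrow> h \<in> carrier G \<Longrightarrow> a \<oplus> (h \<ominus> a) = h"
  by (metis a_comm minus_closed minus_eq add.inv_solve_right')
lemma B5: "a \<in> carrier G \<Longrightarrow> b \<in> carrier G \<Longrightarrow> a \<ominus> b = c \<Longrightarrow> a = b \<oplus> c"
  using B4[of b a] by simp
end

locale free_ctx = subQ R for R +
  fixes F :: "(rat,'f) module" and G :: "(rat,'a) module" and E :: "('e,'m) ring_scheme"
    and W :: "'f set" and i \<pi>
  assumes modF: "module (Qring R) F" and modG: "module (Qring R) G" and aE: "abelian_group E"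
    and Wsub: "W \<subseteq> carrier F" and indep: "lin_indep R F W id" and span: "R_spans R F W"
    and hi: "add_hom G E i" and ii: "inj_on i (carrier G)" and hp: "add_hom E F \<pi>"
    and surj: "\<pi> ` carrier E = carrier F" and ker: "{e \<in> carrier E. \<pi> e = \<zero>\<^bsub>F\<^esub>} = i ` carrier G"
begin

sublocale FR: Rmod R F by (rule Rmod.intro, rule subQ_axioms, simp add: Rmod_axioms_def modF)
sublocale GR: Rmod R G by (rule Rmod.intro, rule subQ_axioms, simp add: Rmod_axioms_def modG)
sublocale E: abelian_group E by (rule aE)

lemma aF: "abelian_group F" using modF by (simp add: module_def)
lemma aG: "abelian_group G" using modG by (simp add: module_def)

lemma iE: "g \<in> carrier G \<Longrightarrow> i g \<in> carrier E" using hi by (auto simp: add_hom_def)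
lemma pF: "e \<in> carrier E \<Longrightarrow> \<pi> e \<in> carrier F" using hp by (auto simp: add_hom_def)
lemma i0: "i \<zero>\<^bsub>G\<^esub> = \<zero>\<^bsub>E\<^esub>" using add_hom_zero[OF aG aE hi] .
lemma ppow: "e \<in> carrier E \<Longrightarrow> \<pi> (add_pow E n e) = add_pow F (n::int) (\<pi> e)"
  using add_hom_pow[OF aE aF hp] by blast
lemma ipow: "g \<in> carrier G \<Longrightarrow> i (add_pow G n g) = add_pow E (n::int) (i g)"
  using add_hom_pow[OF aG aE hi] by blast
lemma kerE: "e \<in> carrier E \<Longrightarrow> \<pi> e = \<zero>\<^bsub>F\<^esub> \<Longrightarrow> \<exists>g\<in>carrier G. e = i g"
  using ker by blast
lemma pi_i: "g \<in> carrier G \<Longrightarrow> \<pi> (i g) = \<zero>\<^bsub>F\<^esub>"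
  using ker by blast
lemma pminus: "a \<in> carrier E \<Longrightarrow> b \<in> carrier E \<Longrightarrow> \<pi> (a \<ominus>\<^bsub>E\<^esub> b) = \<pi> a \<ominus>\<^bsub>F\<^esub> \<pi> b"
  using add_hom_minus[OF aE aF hp] by blast
lemma padd: "a \<in> carrier E \<Longrightarrow> b \<in> carrier E \<Longrightarrow> \<pi> (a \<oplus>\<^bsub>E\<^esub> b) = \<pi> a \<oplus>\<^bsub>F\<^esub> \<pi> b"
  using hp by (simp add: add_hom_def)
lemma iadd: "a \<in> carrier G \<Longrightarrow> b \<in> carrier G \<Longrightarrow> i (a \<oplus>\<^bsub>G\<^esub> b) = i a \<oplus>\<^bsub>E\<^esub> i b"
  using hi by (simp add: add_hom_def)

lemma Epow_minus: "a \<in> carrier E \<Longrightarrow> b \<in> carrier E \<Longrightarrow>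
   add_pow E (n::int) (a \<ominus>\<^bsub>E\<^esub> b) = add_pow E n a \<ominus>\<^bsub>E\<^esub> add_pow E n b"
  using E.add.int_pow_mult_distrib[of a "\<ominus>\<^bsub>E\<^esub> b" n] E.add.int_pow_inv[of b n]
  by (simp add: a_minus_def E.a_comm)

lemma mul_inj:
  assumes d: "1 / of_int d \<in> R" "d \<noteq> 0" and x: "x \<in> carrier E" and z: "add_pow E d x = \<zero>\<^bsub>E\<^esub>"
  shows "x = \<zero>\<^bsub>E\<^esub>"
proof -
  have "add_pow F d (\<pi> x) = \<zero>\<^bsub>F\<^esub>" using ppow[OF x] z add_hom_zero[OF aE aF hp] by metis
  hence "\<pi> x = (1 / of_int d) \<odot>\<^bsub>F\<^esub> \<zero>\<^bsub>F\<^esub>" using FR.div_unique[OF d pF[OF x]] by simp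
  hence "\<pi> x = \<zero>\<^bsub>F\<^esub>" using FR.sm_rzero d by simp
  then obtain g where g: "g \<in> carrier G" "x = i g" using kerE x by blast
  have "i (add_pow G d g) = i \<zero>\<^bsub>G\<^esub>" using ipow g z i0 by simp
  hence "add_pow G d g = \<zero>\<^bsub>G\<^esub>" using ii g by (simp add: inj_on_def)
  hence "g = (1 / of_int d) \<odot>\<^bsub>G\<^esub> \<zero>\<^bsub>G\<^esub>" using GR.div_unique[OF d g(1)] by simp
  hence "g = \<zero>\<^bsub>G\<^esub>" using GR.sm_rzero d by simp
  thus ?thesis using g i0 by simp
qed

lemma div_ex1:
  assumes d: "1 / of_int d \<in> R" "d \<noteq> 0" and e: "e \<in> carrier E"
  shows "\<exists>!e'. e' \<in> carrier E \<and> add_pow E d e' = e"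
proof (rule ex_ex1I)
  define a where "a = (1 / of_int d) \<odot>\<^bsub>F\<^esub> \<pi> e"
  have aF': "a \<in> carrier F" using FR.sm_closed d pF e by (simp add: a_def)
  then obtain e1 where e1: "e1 \<in> carrier E" "\<pi> e1 = a" using surj by (metis imageE)
  define x where "x = e \<ominus>\<^bsub>E\<^esub> add_pow E d e1"
  have xE: "x \<in> carrier E" using e e1 by (simp add: x_def)
  have "\<pi> x = \<pi> e \<ominus>\<^bsub>F\<^esub> add_pow F d a" using pminus e e1 ppow by (simp add: x_def)
  also have "\<dots> = \<zero>\<^bsub>F\<^esub>" using FR.mul_div[OF d pF[OF e]] by (simp add: a_def FR.M.r_neg a_minus_def pF e)
  finally obtain g where g: "g \<in> carrier G" "x = i g" using kerE xE by blast
  define g' where "g' = (1 / of_int d) \<odot>\<^bsub>G\<^esub> g"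
  have g'G: "g' \<in> carrier G" using GR.sm_closed d g by (simp add: g'_def)
  have "add_pow G d g' = g" using GR.mul_div[OF d g(1)] by (simp add: g'_def)
  hence ig: "add_pow E d (i g') = x" using ipow[OF g'G, of d] g by simp
  have "add_pow E d (e1 \<oplus>\<^bsub>E\<^esub> i g') = add_pow E d e1 \<oplus>\<^bsub>E\<^esub> add_pow E d (i g')"
    using E.add.int_pow_mult_distrib e1 iE g'G E.a_comm by simp
  also have "\<dots> = e" using ig E.B4 e e1 by (simp add: x_def)
  finally show "\<exists>e'. e' \<in> carrier E \<and> add_pow E d e' = e" using e1 iE g'G by blast
next
  fix x y assume x: "x \<in> carrier E \<and> add_pow E d x = e" and y: "y \<in> carrier E \<and> add_pow E d y = e"
  have "add_pow E d (x \<ominus>\<^bsub>E\<^esub> y) = \<zero>\<^bsub>E\<^esub>" using Epow_minus x y e by (simp add: E.r_neg a_minus_def)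
  hence "x \<ominus>\<^bsub>E\<^esub> y = \<zero>\<^bsub>E\<^esub>" using mul_inj d x y by simp
  thus "x = y" using E.B5 x y by (metis E.r_zero)
qed

definition divE :: "int \<Rightarrow> 'e \<Rightarrow> 'e" where
  "divE d e = (THE e'. e' \<in> carrier E \<and> add_pow E d e' = e)"

lemma divE: assumes "1 / of_int d \<in> R" "d \<noteq> 0" "e \<in> carrier E"
  shows "divE d e \<in> carrier E" "add_pow E d (divE d e) = e"
  using theI'[OF div_ex1[OF assms]] by (auto simp: divE_def)

lemma divE_unique: assumes "1 / of_int d \<in> R" "d \<noteq> 0" "e \<in> carrier E"
    "e' \<in> carrier E" "add_pow E d e' = e"
  shows "divE d e = e'"
  using div_ex1[OF assms(1-3)] divE[OF assms(1-3)] assms(4,5) by blast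

end


context free_ctx begin

definition lamE :: "'e \<Rightarrow> rat \<Rightarrow> 'e" where
  "lamE e0 q = add_pow E (fst (quotient_of q)) (divE (snd (quotient_of q)) e0)"

lemma qo_facts: assumes "q \<in> R" "quotient_of q = (n, d)"
  shows "d > 0" "1 / of_int d \<in> R" "q = of_int n / of_int d"
  using quotient_of_denom_pos[OF assms(2)] R_inv_denom[OF assms] quotient_of_div[OF assms(2)] by auto

lemma lam_rep:
  assumes e0: "e0 \<in> carrier E" and q: "q \<in> R" and b: "b > 0" "1 / of_int b \<in> R"
    and qab: "q = of_int a / of_int b"
  shows "lamE e0 q = add_pow E a (divE b e0)"
proof -
  obtain n d where qo: "quotient_of q = (n, d)" by (cases "quotient_of q")
  note qf = qo_facts[OF q qo]
  have bd: "1 / of_int (b * d) \<in> R"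
  proof -
    have "1 / of_int (b * d) = (1 / of_int b) * (1 / (of_int d :: rat))" by simp
    thus ?thesis using R_closed(4)[OF b(2) qf(2)] by simp
  qed
  have bd0: "b * d \<noteq> 0" using b qf by simp
  define u where "u = divE (b * d) e0"
  have uE: "u \<in> carrier E" and u: "add_pow E (b * d) u = e0" using divE[OF bd bd0 e0] by (auto simp: u_def)
  have pp: "\<And>m k. add_pow E (m::int) (add_pow E k u) = add_pow E (k * m) u"
    using E.add.int_pow_pow[OF uE] by simp
  have db: "divE b e0 = add_pow E d u"
    by (rule divE_unique[OF b(2) _ e0]) (use b uE pp u in \<open>auto simp: mult.commute\<close>)
  have dd: "divE d e0 = add_pow E b u"
    by (rule divE_unique[OF qf(2) _ e0]) (use qf uE pp u in \<open>auto simp: mult.commute\<close>)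
  have nb: "b * n = d * a"
  proof -
    have "(of_int n :: rat) / of_int d = of_int a / of_int b" using qf(3) qab by simp
    hence "(of_int n :: rat) * of_int b = of_int a * of_int d" using b qf(1)
      by (simp add: field_simps)
    hence "(of_int (n * b) :: rat) = of_int (a * d)" by simp
    hence "n * b = a * d" by (simp only: of_int_eq_iff)
    thus ?thesis by (simp add: mult.commute)
  qed
  have "lamE e0 q = add_pow E n (add_pow E b u)" using qo dd by (simp add: lamE_def)
  also have "\<dots> = add_pow E (b * n) u" using pp by simp
  also have "\<dots> = add_pow E (d * a) u" using nb by simp
  also have "\<dots> = add_pow E a (divE b e0)" using pp db by simp
  finally show ?thesis .
qed

lemma lam_closed: assumes e0: "e0 \<in> carrier E" and q: "q \<in> R" shows "lamE e0 q \<in> carrier E"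
proof -
  obtain n d where qo: "quotient_of q = (n, d)" by (cases "quotient_of q")
  note qf = qo_facts[OF q qo]
  have "divE d e0 \<in> carrier E" using divE(1)[OF qf(2) _ e0] qf(1) by simp
  thus ?thesis using qo by (simp add: lamE_def)
qed

lemma lam_zero: assumes e0: "e0 \<in> carrier E" shows "lamE e0 0 = \<zero>\<^bsub>E\<^esub>"
proof -
  have "lamE e0 0 = add_pow E (0::int) (divE 1 e0)"
    by (rule lam_rep[OF e0]) (auto simp: R_closed)
  thus ?thesis by (simp add: add_pow_def)
qed

lemma lam_add: assumes e0: "e0 \<in> carrier E" and q: "q1 \<in> R" "q2 \<in> R"
  shows "lamE e0 (q1 + q2) = lamE e0 q1 \<oplus>\<^bsub>E\<^esub> lamE e0 q2"
proof -
  obtain n1 d1 where qo1: "quotient_of q1 = (n1, d1)" by (cases "quotient_of q1")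
  obtain n2 d2 where qo2: "quotient_of q2 = (n2, d2)" by (cases "quotient_of q2")
  note f1 = qo_facts[OF q(1) qo1] and f2 = qo_facts[OF q(2) qo2]
  define b where "b = d1 * d2"
  have b0: "b > 0" using f1 f2 by (simp add: b_def)
  have bR: "1 / of_int b \<in> R"
  proof -
    have "1 / of_int b = (1 / of_int d1) * (1 / (of_int d2 :: rat))" by (simp add: b_def)
    thus ?thesis using R_closed(4)[OF f1(2) f2(2)] by simp
  qed
  have dvE: "divE b e0 \<in> carrier E" using divE(1)[OF bR _ e0] b0 by simp
  have e1: "q1 = of_int (n1 * d2) / of_int b" using f1 f2 by (simp add: b_def)
  have e2: "q2 = of_int (n2 * d1) / of_int b" using f1 f2 by (simp add: b_def)
  have e12: "q1 + q2 = of_int (n1 * d2 + n2 * d1) / of_int b" using f1 f2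
    by (simp add: b_def field_simps)
  have "lamE e0 (q1 + q2) = add_pow E (n1 * d2 + n2 * d1) (divE b e0)"
    by (rule lam_rep[OF e0 R_closed(3)[OF q] b0 bR e12])
  also have "\<dots> = add_pow E (n1 * d2) (divE b e0) \<oplus>\<^bsub>E\<^esub> add_pow E (n2 * d1) (divE b e0)"
    using E.add.int_pow_mult[OF dvE] by simp
  also have "\<dots> = lamE e0 q1 \<oplus>\<^bsub>E\<^esub> lamE e0 q2"
    using lam_rep[OF e0 q(1) b0 bR e1] lam_rep[OF e0 q(2) b0 bR e2] by simp
  finally show ?thesis .
qed

lemma lam_proj: assumes e0: "e0 \<in> carrier E" and q: "q \<in> R"
  shows "\<pi> (lamE e0 q) = q \<odot>\<^bsub>F\<^esub> \<pi> e0"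
proof -
  obtain n d where qo: "quotient_of q = (n, d)" by (cases "quotient_of q")
  note qf = qo_facts[OF q qo]
  have d0: "d \<noteq> 0" using qf by simp
  have dv: "divE d e0 \<in> carrier E" "add_pow E d (divE d e0) = e0" using divE[OF qf(2) d0 e0] by auto
  have "add_pow F d (\<pi> (divE d e0)) = \<pi> e0" using ppow[OF dv(1), of d] dv(2) by simp
  hence pd: "\<pi> (divE d e0) = (1 / of_int d) \<odot>\<^bsub>F\<^esub> \<pi> e0"
    using FR.div_unique[OF qf(2) d0 pF[OF dv(1)] pF[OF e0]] by simp
  have "\<pi> (lamE e0 q) = add_pow F n (\<pi> (divE d e0))" using qo ppow[OF dv(1)] by (simp add: lamE_def)
  also have "\<dots> = of_int n \<odot>\<^bsub>F\<^esub> ((1 / of_int d) \<odot>\<^bsub>F\<^esub> \<pi> e0)"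
    using FR.add_pow_smult pF[OF dv(1)] pd by simp
  also have "\<dots> = (of_int n * (1 / of_int d)) \<odot>\<^bsub>F\<^esub> \<pi> e0"
    by (rule FR.sm_assoc[OF R_int qf(2) pF[OF e0], symmetric])
  also have "\<dots> = q \<odot>\<^bsub>F\<^esub> \<pi> e0" using qf(3) by simp
  finally show ?thesis .
qed

end


context free_ctx begin

definition spanrep :: "'f \<Rightarrow> 'f set \<times> ('f \<Rightarrow> rat)" where
  "spanrep y = (SOME p. finite (fst p) \<and> fst p \<subseteq> W \<and> snd p ` fst p \<subseteq> R \<and>
      y = finsum F (\<lambda>u. snd p u \<odot>\<^bsub>F\<^esub> u) (fst p))"

definition supp :: "'f \<Rightarrow> 'f set" where "supp y = fst (spanrep y)"
definition co :: "'f \<Rightarrow> 'f \<Rightarrow> rat" where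
  "co y w = (if w \<in> supp y then snd (spanrep y) w else 0)"

lemma rep_props:
  assumes y: "y \<in> carrier F"
  shows "finite (supp y)" "supp y \<subseteq> W" "\<And>w. co y w \<in> R" "\<And>w. w \<notin> supp y \<Longrightarrow> co y w = 0"
    "y = finsum F (\<lambda>u. co y u \<odot>\<^bsub>F\<^esub> u) (supp y)"
proof -
  have "\<exists>A c. finite A \<and> A \<subseteq> W \<and> c ` A \<subseteq> R \<and> y = finsum F (\<lambda>u. c u \<odot>\<^bsub>F\<^esub> u) A"
    using bspec[OF span[unfolded R_spans_def] y] .
  then obtain A c where Ac0: "finite A \<and> A \<subseteq> W \<and> c ` A \<subseteq> R \<and> y = finsum F (\<lambda>u. c u \<odot>\<^bsub>F\<^esub> u) A"
    by blast
  hence Ac: "finite A" "A \<subseteq> W" "c ` A \<subseteq> R" "y = finsum F (\<lambda>u. c u \<odot>\<^bsub>F\<^esub> u) A" by auto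
  have "\<exists>p. finite (fst p) \<and> fst p \<subseteq> W \<and> snd p ` fst p \<subseteq> R \<and>
      y = finsum F (\<lambda>u. snd p u \<odot>\<^bsub>F\<^esub> u) (fst p)"
    by (rule exI[of _ "(A, c)"]) (use Ac in simp)
  from someI_ex[OF this] have P: "finite (supp y)" "supp y \<subseteq> W" "snd (spanrep y) ` supp y \<subseteq> R"
    "y = finsum F (\<lambda>u. snd (spanrep y) u \<odot>\<^bsub>F\<^esub> u) (supp y)"
    by (auto simp: supp_def spanrep_def[symmetric])
  show "finite (supp y)" "supp y \<subseteq> W" by (fact P(1), fact P(2))
  show "\<And>w. co y w \<in> R" using P(3) R_closed(1) by (auto simp: co_def)
  show "\<And>w. w \<notin> supp y \<Longrightarrow> co y w = 0" by (simp add: co_def)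
  have "finsum F (\<lambda>u. co y u \<odot>\<^bsub>F\<^esub> u) (supp y) = finsum F (\<lambda>u. snd (spanrep y) u \<odot>\<^bsub>F\<^esub> u) (supp y)"
  proof (rule FR.M.finsum_cong')
    have Pc: "\<And>x. x \<in> supp y \<Longrightarrow> snd (spanrep y) x \<in> R" using P(3) by auto
    have Px: "\<And>x. x \<in> supp y \<Longrightarrow> x \<in> carrier F" using P(2) Wsub by auto
    show "(\<lambda>u. snd (spanrep y) u \<odot>\<^bsub>F\<^esub> u) \<in> supp y \<rightarrow> carrier F"
      using Pc Px FR.sm_closed by (auto intro!: Pi_I)
  qed (simp_all add: co_def)
  thus "y = finsum F (\<lambda>u. co y u \<odot>\<^bsub>F\<^esub> u) (supp y)" using P(4) by simp
qed

lemma rep_ext: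
  assumes y: "y \<in> carrier F" and V: "finite V" "supp y \<subseteq> V" "V \<subseteq> W"
  shows "y = finsum F (\<lambda>u. co y u \<odot>\<^bsub>F\<^esub> u) V"
proof -
  note rp = rep_props[OF y]
  have "finsum F (\<lambda>u. co y u \<odot>\<^bsub>F\<^esub> u) (supp y) = finsum F (\<lambda>u. co y u \<odot>\<^bsub>F\<^esub> u) V"
  proof (rule FR.M.add.finprod_mono_neutral_cong_left[OF V(1) V(2)])
    show "\<And>i. i \<in> V - supp y \<Longrightarrow> co y i \<odot>\<^bsub>F\<^esub> i = \<zero>\<^bsub>F\<^esub>"
      using rp(4) FR.sm_lzero V(3) Wsub by auto
    show "(\<lambda>u. co y u \<odot>\<^bsub>F\<^esub> u) \<in> V \<rightarrow> carrier F" using rp(3) FR.sm_closed V(3) Wsub by auto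
  qed simp
  thus ?thesis using rp(5) by simp
qed

lemma uniq:
  assumes V: "finite V" "V \<subseteq> W" and a: "\<And>w. w \<in> V \<Longrightarrow> a w \<in> R" and b: "\<And>w. w \<in> V \<Longrightarrow> b w \<in> R"
    and eq: "finsum F (\<lambda>u. a u \<odot>\<^bsub>F\<^esub> u) V = finsum F (\<lambda>u. b u \<odot>\<^bsub>F\<^esub> u) V"
  shows "\<forall>w\<in>V. a w = b w"
proof -
  have uF: "\<And>u. u \<in> V \<Longrightarrow> u \<in> carrier F" using V Wsub by auto
  define S where "S = finsum F (\<lambda>u. b u \<odot>\<^bsub>F\<^esub> u) V"
  have fa: "(\<lambda>u. a u \<odot>\<^bsub>F\<^esub> u) \<in> V \<rightarrow> carrier F" using a uF FR.sm_closed by auto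
  have fb: "(\<lambda>u. b u \<odot>\<^bsub>F\<^esub> u) \<in> V \<rightarrow> carrier F" using b uF FR.sm_closed by auto
  have m1: "(- 1 :: rat) \<in> R" using R_closed(5)[OF R_closed(2)] .
  have fnb: "(\<lambda>u. (- 1) \<odot>\<^bsub>F\<^esub> (b u \<odot>\<^bsub>F\<^esub> u)) \<in> V \<rightarrow> carrier F"
  proof
    fix u assume "u \<in> V"
    hence "b u \<odot>\<^bsub>F\<^esub> u \<in> carrier F" using fb by blast
    thus "(- 1) \<odot>\<^bsub>F\<^esub> (b u \<odot>\<^bsub>F\<^esub> u) \<in> carrier F" using FR.sm_closed m1 by blast
  qed
  have SF: "S \<in> carrier F" using fb by (simp add: S_def)
  have "finsum F (\<lambda>u. (a u - b u) \<odot>\<^bsub>F\<^esub> u) V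
      = finsum F (\<lambda>u. a u \<odot>\<^bsub>F\<^esub> u \<oplus>\<^bsub>F\<^esub> (- 1) \<odot>\<^bsub>F\<^esub> (b u \<odot>\<^bsub>F\<^esub> u)) V"
  proof (rule FR.M.finsum_cong')
    fix u assume u: "u \<in> V"
    have "(a u - b u) \<odot>\<^bsub>F\<^esub> u = (a u + (- 1) * b u) \<odot>\<^bsub>F\<^esub> u" by simp
    also have "\<dots> = a u \<odot>\<^bsub>F\<^esub> u \<oplus>\<^bsub>F\<^esub> ((- 1) * b u) \<odot>\<^bsub>F\<^esub> u"
      by (rule FR.sm_ldistr[OF a[OF u] R_closed(4)[OF m1 b[OF u]] uF[OF u]])
    also have "\<dots> = a u \<odot>\<^bsub>F\<^esub> u \<oplus>\<^bsub>F\<^esub> (- 1) \<odot>\<^bsub>F\<^esub> (b u \<odot>\<^bsub>F\<^esub> u)"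
      using FR.sm_assoc[of "- 1" "b u" u] b u uF R_closed by simp
    finally show "(a u - b u) \<odot>\<^bsub>F\<^esub> u = a u \<odot>\<^bsub>F\<^esub> u \<oplus>\<^bsub>F\<^esub> (- 1) \<odot>\<^bsub>F\<^esub> (b u \<odot>\<^bsub>F\<^esub> u)" .
  qed (use fa fnb in \<open>auto intro: FR.M.a_closed\<close>)
  also have "\<dots> = finsum F (\<lambda>u. a u \<odot>\<^bsub>F\<^esub> u) V \<oplus>\<^bsub>F\<^esub> finsum F (\<lambda>u. (- 1) \<odot>\<^bsub>F\<^esub> (b u \<odot>\<^bsub>F\<^esub> u)) V"
    using FR.M.finsum_addf[OF fa fnb] by simp
  also have "finsum F (\<lambda>u. (- 1) \<odot>\<^bsub>F\<^esub> (b u \<odot>\<^bsub>F\<^esub> u)) V = (- 1) \<odot>\<^bsub>F\<^esub> S"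
    using module.finsum_smult_ldistr[OF modF V(1) _ fb, of "- 1"] R_closed by (simp add: S_def)
  also have "\<dots> = \<ominus>\<^bsub>F\<^esub> S" using FR.sm_neg1[OF SF] .
  finally have z: "finsum F (\<lambda>u. (a u - b u) \<odot>\<^bsub>F\<^esub> u) V = \<zero>\<^bsub>F\<^esub>"
    using eq SF by (simp add: S_def[symmetric] FR.M.r_neg)
  have idf: "finsum F (\<lambda>i. (\<lambda>u. a u - b u) i \<odot>\<^bsub>F\<^esub> id i) V = \<zero>\<^bsub>F\<^esub>" using z by simp
  have img: "(\<lambda>u. a u - b u) ` V \<subseteq> R" using a b R_diff by auto
  have "\<forall>i\<in>V. (\<lambda>u. a u - b u) i = 0"
    using indep[unfolded lin_indep_def, rule_format, OF conjI[OF V(1) conjI[OF V(2) conjI[OF img idf]]]] by blast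
  hence "\<forall>w\<in>V. a w - b w = 0" by simp
  thus ?thesis by simp
qed

definition ew :: "'f \<Rightarrow> 'e" where "ew w = (SOME e. e \<in> carrier E \<and> \<pi> e = w)"

lemma ew: assumes "w \<in> W" shows "ew w \<in> carrier E" "\<pi> (ew w) = w"
proof -
  have "w \<in> \<pi> ` carrier E" using assms Wsub surj by auto
  hence "\<exists>e. e \<in> carrier E \<and> \<pi> e = w" by auto
  from someI_ex[OF this] show "ew w \<in> carrier E" "\<pi> (ew w) = w" by (auto simp: ew_def)
qed

definition sE :: "'f \<Rightarrow> 'e" where
  "sE y = finsum E (\<lambda>w. lamE (ew w) (co y w)) (supp y)"

lemma sE_ext:
  assumes y: "y \<in> carrier F" and V: "finite V" "supp y \<subseteq> V" "V \<subseteq> W"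
  shows "sE y = finsum E (\<lambda>w. lamE (ew w) (co y w)) V"
  unfolding sE_def
proof (rule E.add.finprod_mono_neutral_cong_left[OF V(1) V(2)])
  note rp = rep_props[OF y]
  show "\<And>i. i \<in> V - supp y \<Longrightarrow> lamE (ew i) (co y i) = \<zero>\<^bsub>E\<^esub>"
    using rp(4) lam_zero ew V(3) by auto
  show "(\<lambda>w. lamE (ew w) (co y w)) \<in> V \<rightarrow> carrier E" using rp(3) lam_closed ew V(3) by auto
qed simp

lemma sE_closed: assumes y: "y \<in> carrier F" shows "sE y \<in> carrier E"
proof -
  note rp = rep_props[OF y]
  have fc: "(\<lambda>w. lamE (ew w) (co y w)) \<in> supp y \<rightarrow> carrier E" using rp(2,3) lam_closed ew by auto
  thus ?thesis unfolding sE_def by (rule E.finsum_closed)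
qed

lemma sE_proj: assumes y: "y \<in> carrier F" shows "\<pi> (sE y) = y"
proof -
  note rp = rep_props[OF y]
  have fc: "(\<lambda>w. lamE (ew w) (co y w)) \<in> supp y \<rightarrow> carrier E" using rp(2,3) lam_closed ew by auto
  have "\<pi> (sE y) = finsum F (\<lambda>w. \<pi> (lamE (ew w) (co y w))) (supp y)"
    unfolding sE_def by (rule hom_finsum[OF aE aF hp rp(1) fc])
  also have "\<dots> = finsum F (\<lambda>u. co y u \<odot>\<^bsub>F\<^esub> u) (supp y)"
    by (rule FR.M.finsum_cong') (use rp lam_proj ew FR.sm_closed Wsub in auto)
  finally show ?thesis using rp(5) by simp
qed

lemma sE_add: assumes y: "y1 \<in> carrier F" "y2 \<in> carrier F"
  shows "sE (y1 \<oplus>\<^bsub>F\<^esub> y2) = sE y1 \<oplus>\<^bsub>E\<^esub> sE y2"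
proof -
  define y3 where "y3 = y1 \<oplus>\<^bsub>F\<^esub> y2"
  have y3: "y3 \<in> carrier F" using y by (simp add: y3_def)
  note r1 = rep_props[OF y(1)] and r2 = rep_props[OF y(2)] and r3 = rep_props[OF y3]
  define V where "V = supp y1 \<union> supp y2 \<union> supp y3"
  have V: "finite V" "V \<subseteq> W" using r1 r2 r3 by (auto simp: V_def)
  have sub: "supp y1 \<subseteq> V" "supp y2 \<subseteq> V" "supp y3 \<subseteq> V" by (auto simp: V_def)
  have VF: "\<And>u. u \<in> V \<Longrightarrow> u \<in> carrier F" using V Wsub by auto
  have f1: "(\<lambda>u. co y1 u \<odot>\<^bsub>F\<^esub> u) \<in> V \<rightarrow> carrier F" using r1 VF FR.sm_closed by auto
  have f2: "(\<lambda>u. co y2 u \<odot>\<^bsub>F\<^esub> u) \<in> V \<rightarrow> carrier F" using r2 VF FR.sm_closed by auto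
  have "finsum F (\<lambda>u. (co y1 u + co y2 u) \<odot>\<^bsub>F\<^esub> u) V
      = finsum F (\<lambda>u. co y1 u \<odot>\<^bsub>F\<^esub> u \<oplus>\<^bsub>F\<^esub> co y2 u \<odot>\<^bsub>F\<^esub> u) V"
    by (rule FR.M.finsum_cong') (use r1 r2 VF FR.sm_ldistr FR.sm_closed in auto)
  also have "\<dots> = y1 \<oplus>\<^bsub>F\<^esub> y2"
    using FR.M.finsum_addf[OF f1 f2] rep_ext[OF y(1) V(1) sub(1) V(2)] rep_ext[OF y(2) V(1) sub(2) V(2)]
    by simp
  also have "\<dots> = finsum F (\<lambda>u. co y3 u \<odot>\<^bsub>F\<^esub> u) V"
    using rep_ext[OF y3 V(1) sub(3) V(2)] by (simp add: y3_def)
  finally have feq: "finsum F (\<lambda>u. (co y1 u + co y2 u) \<odot>\<^bsub>F\<^esub> u) V = finsum F (\<lambda>u. co y3 u \<odot>\<^bsub>F\<^esub> u) V" .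
  have aR: "\<And>w. w \<in> V \<Longrightarrow> co y1 w + co y2 w \<in> R" by (rule R_closed(3)[OF r1(3) r2(3)])
  have bR: "\<And>w. w \<in> V \<Longrightarrow> co y3 w \<in> R" by (rule r3(3))
  have "\<forall>w\<in>V. co y1 w + co y2 w = co y3 w"
    by (rule uniq[OF V, of "\<lambda>u. co y1 u + co y2 u" "co y3", OF aR bR feq])
  hence cadd: "\<And>w. w \<in> V \<Longrightarrow> co y3 w = co y1 w + co y2 w" by simp
  have g1: "(\<lambda>w. lamE (ew w) (co y1 w)) \<in> V \<rightarrow> carrier E" using r1 lam_closed ew V(2) by auto
  have g2: "(\<lambda>w. lamE (ew w) (co y2 w)) \<in> V \<rightarrow> carrier E" using r2 lam_closed ew V(2) by auto
  have "sE y3 = finsum E (\<lambda>w. lamE (ew w) (co y3 w)) V" by (rule sE_ext[OF y3 V(1) sub(3) V(2)])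
  also have "\<dots> = finsum E (\<lambda>w. lamE (ew w) (co y1 w) \<oplus>\<^bsub>E\<^esub> lamE (ew w) (co y2 w)) V"
    by (rule E.finsum_cong') (use cadd lam_add ew V(2) r1 r2 g1 g2 in auto)
  also have "\<dots> = sE y1 \<oplus>\<^bsub>E\<^esub> sE y2"
    using E.finsum_addf[OF g1 g2] sE_ext[OF y(1) V(1) sub(1) V(2)] sE_ext[OF y(2) V(1) sub(2) V(2)] by simp
  finally show ?thesis by (simp add: y3_def)
qed

end

lemma free_ext:
  fixes F :: "(rat,'f) module" and G :: "(rat,'a) module"
  assumes R: "subring_of_Q R" and mG: "R_module R G" and fr: "free_R_module R F"
  shows "Ext_zero F G"
  unfolding Ext_zero_def
proof (intro allI impI)
  fix E :: "('a \<times> 'f) ring" and i \<pi>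
  assume h: "abelian_group E \<and> add_hom G E i \<and> inj_on i (carrier G) \<and>
        add_hom E F \<pi> \<and> \<pi> ` carrier E = carrier F \<and>
        {e \<in> carrier E. \<pi> e = \<zero>\<^bsub>F\<^esub>} = i ` carrier G"
  obtain W where W: "W \<subseteq> carrier F" "lin_indep R F W id" "R_spans R F W"
    and mF: "R_module R F" using fr unfolding free_R_module_def by blast
  interpret fc: free_ctx R F G E W i \<pi>
    by (rule free_ctx.intro, simp add: subQ_def R)
      (use h W mF mG in \<open>auto simp: free_ctx_axioms_def R_module_def\<close>)
  show "\<exists>s. add_hom F E s \<and> (\<forall>a\<in>carrier F. \<pi> (s a) = a)"
    by (rule exI[of _ fc.sE]) (auto simp: add_hom_def fc.sE_closed fc.sE_add fc.sE_proj)
qed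



lemma module_abelian: "R_module R M \<Longrightarrow> abelian_group M"
  unfolding R_module_def module_def by blast

lemma submodule_abelian_subgroup:
  assumes "abelian_group G" "submodule H R G"
  shows "abelian_subgroup H G" "subgrp G H"
proof -
  interpret G: abelian_group G by fact
  have sg: "subgroup H (add_monoid G)" using assms(2) by (simp add: submodule_def)
  show "abelian_subgroup H G" by (rule abelian_subgroupI2[OF G.a_comm_group sg])
  show "subgrp G H" unfolding subgrp_def
    using subgroup.subset[OF sg] subgroup.one_closed[OF sg] subgroup.m_closed[OF sg]
      subgroup.m_inv_closed[OF sg] by (simp add: a_inv_def)
qed

lemma quot_props:
  fixes G :: "(rat,'a) module"
  assumes aG: "abelian_group G" and K: "abelian_subgroup K G" and KH: "K \<subseteq> H" and Hc: "H \<subseteq> carrier G"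
  shows "\<And>h. h \<in> H \<Longrightarrow> K +>\<^bsub>G\<^esub> h \<in> carrier (quot_mod G H K)"
    and "\<And>u v. u \<in> H \<Longrightarrow> v \<in> H \<Longrightarrow> K +>\<^bsub>G\<^esub> (u \<oplus>\<^bsub>G\<^esub> v) = (K +>\<^bsub>G\<^esub> u) \<oplus>\<^bsub>quot_mod G H K\<^esub> (K +>\<^bsub>G\<^esub> v)"
    and "\<And>h. h \<in> H \<Longrightarrow> K +>\<^bsub>G\<^esub> h = K \<longleftrightarrow> h \<in> K"
    and "\<zero>\<^bsub>quot_mod G H K\<^esub> = K"
    and "(\<lambda>h. K +>\<^bsub>G\<^esub> h) ` H = carrier (quot_mod G H K)"
    and "K \<oplus>\<^bsub>quot_mod G H K\<^esub> K = K"
proof -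
  interpret K: abelian_subgroup K G by fact
  show "\<And>h. h \<in> H \<Longrightarrow> K +>\<^bsub>G\<^esub> h \<in> carrier (quot_mod G H K)" by (simp add: quot_mod_def)
  show "\<And>u v. u \<in> H \<Longrightarrow> v \<in> H \<Longrightarrow> K +>\<^bsub>G\<^esub> (u \<oplus>\<^bsub>G\<^esub> v) = (K +>\<^bsub>G\<^esub> u) \<oplus>\<^bsub>quot_mod G H K\<^esub> (K +>\<^bsub>G\<^esub> v)"
    using Hc by (simp add: quot_mod_def K.a_rcos_sum subsetD)
  show "\<And>h. h \<in> H \<Longrightarrow> K +>\<^bsub>G\<^esub> h = K \<longleftrightarrow> h \<in> K"
    using Hc K.a_rcos_self K.a_rcos_const by (metis subsetD)
  show "\<zero>\<^bsub>quot_mod G H K\<^esub> = K" by (simp add: quot_mod_def)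
  show "(\<lambda>h. K +>\<^bsub>G\<^esub> h) ` H = carrier (quot_mod G H K)" by (simp add: quot_mod_def)
  have "K \<oplus>\<^bsub>quot_mod G H K\<^esub> K = (K +>\<^bsub>G\<^esub> \<zero>\<^bsub>G\<^esub>) <+>\<^bsub>G\<^esub> (K +>\<^bsub>G\<^esub> \<zero>\<^bsub>G\<^esub>)"
    using K.a_rcos_const[of "\<zero>\<^bsub>G\<^esub>"] K.a_subgroup by (simp add: quot_mod_def additive_subgroup.zero_closed)
  also have "\<dots> = K" using K.a_rcos_sum[of "\<zero>\<^bsub>G\<^esub>" "\<zero>\<^bsub>G\<^esub>"] K.a_rcos_const[of "\<zero>\<^bsub>G\<^esub>"] K.a_subgroup
    by (simp add: additive_subgroup.zero_closed)
  finally show "K \<oplus>\<^bsub>quot_mod G H K\<^esub> K = K" .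
qed

theorem corollary5p4:
  fixes R :: "rat set" and \<Phi> :: "(rat, 'c) module set" and G :: "(rat, 'a) module"
    and r :: "('i \<times> 'i) set" and C :: "'i \<Rightarrow> 'a set"
  assumes "subring_of_Q R"
    and "\<forall>G'\<in>\<Phi>. finite_rank_free_by_1 R G'"
    and "R_module R G" and "torsion_free G" and "nuc G = R"
    and "Phi_complete \<Phi> G"
    and "Phi_represented R \<Phi> G r C"
  shows "splitter G"
  unfolding splitter_def Ext_zero_def
proof (intro allI impI)
  fix E :: "('a \<times> 'a) ring" and i \<pi>
  assume ext: "abelian_group E \<and> add_hom G E i \<and> inj_on i (carrier G) \<and>
        add_hom E G \<pi> \<and> \<pi> ` carrier E = carrier G \<and>
        {e \<in> carrier E. \<pi> e = \<zero>\<^bsub>G\<^esub>} = i ` carrier G"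
  hence aE: "abelian_group E" and hi: "add_hom G E i" and ii: "inj_on i (carrier G)"
    and hp: "add_hom E G \<pi>" and surj: "\<pi> ` carrier E = carrier G"
    and ker: "{e \<in> carrier E. \<pi> e = \<zero>\<^bsub>G\<^esub>} = i ` carrier G" by auto
  have aG: "abelian_group G" using assms(3) by (rule module_abelian)
  have PR: "Well_order r \<and>
      (\<forall>\<alpha>\<in>Field r. submodule (C \<alpha>) (Qring R) G) \<and>
      (\<forall>\<alpha>\<in>Field r. \<forall>\<beta>\<in>Field r. (\<alpha>, \<beta>) \<in> r \<longrightarrow> C \<alpha> \<subseteq> C \<beta>) \<and>
      (\<forall>\<alpha>\<in>Field r. (\<forall>\<beta>\<in>Field r. (\<alpha>, \<beta>) \<in> r) \<longrightarrow> C \<alpha> = {\<zero>\<^bsub>G\<^esub>}) \<and>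
      (\<forall>\<alpha>\<in>Field r. (\<exists>\<beta>\<in>Field r. (\<beta>, \<alpha>) \<in> r \<and> \<beta> \<noteq> \<alpha>) \<and> (\<forall>\<beta>\<in>Field r. (\<beta>, \<alpha>) \<in> r \<and> \<beta> \<noteq> \<alpha> \<longrightarrow> (\<exists>\<gamma>\<in>Field r. ((\<beta>, \<gamma>) \<in> r \<and> \<beta> \<noteq> \<gamma>) \<and> ((\<gamma>, \<alpha>) \<in> r \<and> \<gamma> \<noteq> \<alpha>)))
          \<longrightarrow> C \<alpha> = (\<Union>\<beta>\<in>{\<beta>\<in>Field r. (\<beta>, \<alpha>) \<in> r \<and> \<beta> \<noteq> \<alpha>}. C \<beta>)) \<and>
      (\<forall>\<alpha>\<in>Field r. \<forall>\<beta>\<in>Field r. ((\<alpha>, \<beta>) \<in> r \<and> \<alpha> \<noteq> \<beta>) \<and> (\<forall>\<gamma>\<in>Field r. ((\<alpha>, \<gamma>) \<in> r \<and> \<alpha> \<noteq> \<gamma>) \<longrightarrow> (\<beta>, \<gamma>) \<in> r)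
          \<longrightarrow> (\<exists>G'\<in>\<Phi>. R_iso R (quot_mod G (C \<beta>) (C \<alpha>)) G') \<or>
              free_R_module R (quot_mod G (C \<beta>) (C \<alpha>))) \<and>
      (\<Union>\<alpha>\<in>Field r. C \<alpha>) = carrier G"
    using assms(7) unfolding Phi_represented_def Let_def by assumption
  note WO = PR[THEN conjunct1]
  note subm = PR[THEN conjunct2, THEN conjunct1]
  note mono = PR[THEN conjunct2, THEN conjunct2, THEN conjunct1]
  note bot = PR[THEN conjunct2, THEN conjunct2, THEN conjunct2, THEN conjunct1]
  note cont = PR[THEN conjunct2, THEN conjunct2, THEN conjunct2, THEN conjunct2, THEN conjunct1]
  note quo = PR[THEN conjunct2, THEN conjunct2, THEN conjunct2, THEN conjunct2, THEN conjunct2, THEN conjunct1]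
  note cover = PR[THEN conjunct2, THEN conjunct2, THEN conjunct2, THEN conjunct2, THEN conjunct2, THEN conjunct2]
  have Csub: "\<forall>\<alpha>\<in>Field r. subgrp G (C \<alpha>)" using subm submodule_abelian_subgroup(2)[OF aG] by blast
  have Cab: "\<And>\<alpha>. \<alpha> \<in> Field r \<Longrightarrow> abelian_subgroup (C \<alpha>) G" using subm submodule_abelian_subgroup(1)[OF aG] by blast
  have step: "\<forall>\<alpha>\<in>Field r. \<forall>\<beta>\<in>Field r. ((\<alpha>, \<beta>) \<in> r \<and> \<alpha> \<noteq> \<beta>) \<and> (\<forall>\<gamma>\<in>Field r. ((\<alpha>, \<gamma>) \<in> r \<and> \<alpha> \<noteq> \<gamma>) \<longrightarrow> (\<beta>, \<gamma>) \<in> r)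
          \<longrightarrow> (\<forall>s. sect G E \<pi> (C \<alpha>) s \<longrightarrow> (\<exists>s'. sect G E \<pi> (C \<beta>) s' \<and> (\<forall>k\<in>C \<alpha>. s' k = s k)))"
  proof (intro ballI impI allI)
    fix \<alpha> \<beta> s
    assume ab: "\<alpha> \<in> Field r" "\<beta> \<in> Field r"
      and sc: "((\<alpha>, \<beta>) \<in> r \<and> \<alpha> \<noteq> \<beta>) \<and> (\<forall>\<gamma>\<in>Field r. ((\<alpha>, \<gamma>) \<in> r \<and> \<alpha> \<noteq> \<gamma>) \<longrightarrow> (\<beta>, \<gamma>) \<in> r)"
      and sec: "sect G E \<pi> (C \<alpha>) s"
    let ?K = "C \<alpha>" and ?H = "C \<beta>" and ?Q = "quot_mod G (C \<beta>) (C \<alpha>)"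
    have KH: "?K \<subseteq> ?H" using mono ab sc by blast
    have sK: "subgrp G ?K" and sH: "subgrp G ?H" using Csub ab by auto
    have Hc: "?H \<subseteq> carrier G" using sH by (simp add: subgrp_def)
    note qp = quot_props[OF aG Cab[OF ab(1)] KH Hc]
    from quo ab sc have "(\<exists>G'\<in>\<Phi>. R_iso R ?Q G') \<or> free_R_module R ?Q" by blast
    thus "\<exists>s'. sect G E \<pi> ?H s' \<and> (\<forall>k\<in>?K. s' k = s k)"
    proof
      assume "\<exists>G'\<in>\<Phi>. R_iso R ?Q G'"
      then obtain G' f0 where G': "G' \<in> \<Phi>" and bij: "bij_betw f0 (carrier ?Q) (carrier G')"
        and fh: "add_hom ?Q G' f0" unfolding R_iso_def by blast
      have aY: "abelian_group G'" using assms(2) G'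
        unfolding finite_rank_free_by_1_def n_free_by_1_def by (blast intro: module_abelian)
      interpret Y: abelian_group G' by (rule aY)
      have extY: "Ext_zero G' G" using assms(6) G' by (simp add: Phi_complete_def)
      define f where "f = (\<lambda>h. f0 (?K +>\<^bsub>G\<^esub> h))"
      have fY: "\<forall>h\<in>?H. f h \<in> carrier G'"
        using bij qp(1) by (auto simp: f_def bij_betw_def)
      have fadd: "\<forall>u\<in>?H. \<forall>v\<in>?H. f (u \<oplus>\<^bsub>G\<^esub> v) = f u \<oplus>\<^bsub>G'\<^esub> f v"
        using fh qp(1,2) by (simp add: f_def add_hom_def)
      have "f ` ?H = f0 ` ((\<lambda>h. ?K +>\<^bsub>G\<^esub> h) ` ?H)" by (simp add: f_def image_image)
      hence fsurj: "f ` ?H = carrier G'" using qp(5) bij by (simp add: bij_betw_def)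
      have z: "\<zero>\<^bsub>G\<^esub> \<in> ?K" "\<zero>\<^bsub>G\<^esub> \<in> ?H" using sK sH by (auto simp: subgrp_def)
      have Kc: "?K \<in> carrier ?Q" using qp(1)[OF z(2)] qp(3)[OF z(2)] z(1) by simp
      have f0K: "f0 ?K = \<zero>\<^bsub>G'\<^esub>"
      proof -
        have "f0 (?K \<oplus>\<^bsub>?Q\<^esub> ?K) = f0 ?K \<oplus>\<^bsub>G'\<^esub> f0 ?K" using fh Kc unfolding add_hom_def by blast
        hence "f0 ?K = f0 ?K \<oplus>\<^bsub>G'\<^esub> f0 ?K" using qp(6) by simp
        moreover have "f0 ?K \<in> carrier G'" using bij Kc by (auto simp: bij_betw_def)
        ultimately show ?thesis by (metis Y.l_zero Y.zero_closed Y.add.right_cancel)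
      qed
      have fker: "{h\<in>?H. f h = \<zero>\<^bsub>G'\<^esub>} = ?K"
      proof (intro equalityI subsetI)
        fix h assume "h \<in> {h\<in>?H. f h = \<zero>\<^bsub>G'\<^esub>}"
        hence h: "h \<in> ?H" "f0 (?K +>\<^bsub>G\<^esub> h) = f0 ?K" using f0K by (auto simp: f_def)
        have "inj_on f0 (carrier ?Q)" using bij by (simp add: bij_betw_def)
        hence "?K +>\<^bsub>G\<^esub> h = ?K" using h(2) qp(1)[OF h(1)] Kc by (rule inj_onD)
        thus "h \<in> ?K" using qp(3) h by blast
      next
        fix h assume "h \<in> ?K"
        hence hH: "h \<in> ?H" using KH by blast
        hence "?K +>\<^bsub>G\<^esub> h = ?K" using qp(3) \<open>h \<in> ?K\<close> by blast
        thus "h \<in> {h\<in>?H. f h = \<zero>\<^bsub>G'\<^esub>}" using hH f0K by (simp add: f_def)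
      qed
      show ?thesis
        by (rule succ_step[OF aG aE aY hi ii hp ker surj sK sH KH sec fY fadd fsurj fker extY])
    next
      assume fr: "free_R_module R ?Q"
      have aY: "abelian_group ?Q" using fr unfolding free_R_module_def by (blast intro: module_abelian)
      interpret Y: abelian_group ?Q by (rule aY)
      have extY: "Ext_zero ?Q G" by (rule free_ext[OF assms(1) assms(3) fr])
      define f where "f = (\<lambda>h. ?K +>\<^bsub>G\<^esub> h)"
      have fY: "\<forall>h\<in>?H. f h \<in> carrier ?Q" using qp(1) by (simp add: f_def)
      have fadd: "\<forall>u\<in>?H. \<forall>v\<in>?H. f (u \<oplus>\<^bsub>G\<^esub> v) = f u \<oplus>\<^bsub>?Q\<^esub> f v" using qp(2) by (simp add: f_def)
      have fsurj: "f ` ?H = carrier ?Q" using qp(5) by (simp add: f_def)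
      have fker: "{h\<in>?H. f h = \<zero>\<^bsub>?Q\<^esub>} = ?K" using qp(3,4) KH by (auto simp: f_def)
      show ?thesis
        by (rule succ_step[OF aG aE aY hi ii hp ker surj sK sH KH sec fY fadd fsurj fker extY])
    qed
  qed
  obtain s where s: "sect G E \<pi> (carrier G) s"
    using eklof[OF aG aE hp WO Csub mono bot cont cover step] by blast
  show "\<exists>s. add_hom G E s \<and> (\<forall>a\<in>carrier G. \<pi> (s a) = a)"
    using s by (auto simp: sect_def add_hom_def)
qed


end
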